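(* Let $\mathbf{X}$ and $\mathbf{Y}$ be two-dimensional random vectors with $\mathbf{X}\succ_{d}\mathbf{Y}$. Then for every $u\in\mathcal{U}$ satisfying $\frac{\partial^2 u(x_1,x_2)}{\partial x_1\partial x_2}\le 0$ (everywhere), $\mathbb{E}\,u(\mathbf{X})>\mathbb{E}\,u(\mathbf{Y})$.
   Context: For $\mathbf{x},\mathbf{y}\in\mathbb{R}^2$ write $\mathbf{y}\preceq_p\mathbf{x}$ if $y_i\le x_i$ for all $i$, and $\mathbf{x}\succ_p\mathbf{y}$ (Pareto dominance) if $x_i\ge y_i$ for all $i$ and $x_i>y_i$ for some $i$. $\mathcal{U}$ is the class of strictly monotonically increasing functions $u:\mathbb{R}^2\to\mathbb{R}$, i.e. $\mathbf{x}\succ_p\mathbf{y}\implies u(\mathbf{x})>u(\mathbf{y})$. The CDF of a random vector is $F_{\mathbf{X}}(\mathbf{x})=P(\mathbf{X}\preceq_p\mathbf{x})$. $\mathbf{X}\succeq_{\mathrm{FSD}}\mathbf{Y}$ iff $F_{\mathbf{X}}(\mathbf{v})\le F_{\mathbf{Y}}(\mathbf{v})$ for all $\mathbf{v}$; $\mathbf{X}\succ_{\mathrm{FSD}}\mathbf{Y}$ iff additionally $F_{\mathbf{X}}(\mathbf{v})<F_{\mathbf{Y}}(\mathbf{v})$ for some $\mathbf{v}$ (same for real random variables). Distributional dominance $\mathbf{X}\succ_d\mathbf{Y}$: $\mathbf{X}\succeq_{\mathrm{FSD}}\mathbf{Y}$ and $X_i\succ_{\mathrm{FSD}}Y_i$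 for some marginal index $i$. All expectations appearing are assumed to exist. *)

theory Defs
  imports "HOL-Probability.Probability"
begin

definition pareto_dom :: "real \<times> real \<Rightarrow> real \<times> real \<Rightarrow> bool" where
  "pareto_dom x y \<longleftrightarrow> fst x \<ge> fst y \<and> snd x \<ge> snd y \<and> (fst x > fst y \<or> snd x > snd y)"

definition strictly_increasing2 :: "(real \<times> real \<Rightarrow> real) \<Rightarrow> bool" where
  "strictly_increasing2 u \<longleftrightarrow> (\<forall>x y. pareto_dom x y \<longrightarrow> u x > u y)"

definition cdf1 :: "'a measure \<Rightarrow> ('a \<Rightarrow> real) \<Rightarrow> real \<Rightarrow> real" where
  "cdf1 M X t = measure M {\<omega> \<in> space M. X \<omega> \<le> t}"

definition cdf2 :: "'a measure \<Rightarrow> ('a \<Rightarrow> real \<times> real) \<Rightarrow> real \<times> real \<Rightarrow> real" where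
  "cdf2 M X v = measure M {\<omega> \<in> space M. fst (X \<omega>) \<le> fst v \<and> snd (X \<omega>) \<le> snd v}"

definition fsd_weak1 :: "'a measure \<Rightarrow> ('a \<Rightarrow> real) \<Rightarrow> 'b measure \<Rightarrow> ('b \<Rightarrow> real) \<Rightarrow> bool" where
  "fsd_weak1 M X N Y \<longleftrightarrow> (\<forall>t. cdf1 M X t \<le> cdf1 N Y t)"

definition fsd_strict1 :: "'a measure \<Rightarrow> ('a \<Rightarrow> real) \<Rightarrow> 'b measure \<Rightarrow> ('b \<Rightarrow> real) \<Rightarrow> bool" where
  "fsd_strict1 M X N Y \<longleftrightarrow> fsd_weak1 M X N Y \<and> (\<exists>t. cdf1 M X t < cdf1 N Y t)"

definition fsd_weak2 :: "'a measure \<Rightarrow> ('a \<Rightarrow> real \<times> real) \<Rightarrow> 'b measure \<Rightarrow> ('b \<Rightarrow> real \<times> real) \<Rightarrow> bool" where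
  "fsd_weak2 M X N Y \<longleftrightarrow> (\<forall>v. cdf2 M X v \<le> cdf2 N Y v)"

definition dist_dom :: "'a measure \<Rightarrow> ('a \<Rightarrow> real \<times> real) \<Rightarrow> 'b measure \<Rightarrow> ('b \<Rightarrow> real \<times> real) \<Rightarrow> bool" where
  "dist_dom M X N Y \<longleftrightarrow> fsd_weak2 M X N Y \<and>
     (fsd_strict1 M (\<lambda>\<omega>. fst (X \<omega>)) N (\<lambda>\<omega>. fst (Y \<omega>)) \<or>
      fsd_strict1 M (\<lambda>\<omega>. snd (X \<omega>)) N (\<lambda>\<omega>. snd (Y \<omega>)))"

definition mixed_partial_nonpos :: "(real \<times> real \<Rightarrow> real) \<Rightarrow> bool" where
  "mixed_partial_nonpos u \<longleftrightarrow>
    (\<exists>u2 u12. (\<forall>x1 x2. ((\<lambda>t. u (x1, t)) has_real_derivative u2 x1 x2) (at x2)) \<and>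
              (\<forall>x1 x2. ((\<lambda>s. u2 s x2) has_real_derivative u12 x1 x2) (at x1)) \<and>
              (\<forall>x1 x2. u12 x1 x2 \<le> 0))"

end

theory Submission
  imports Defs
begin
definition downset :: "real set \<Rightarrow> bool" where
  "downset D \<longleftrightarrow> (\<forall>x y. y \<in> D \<longrightarrow> x \<le> y \<longrightarrow> x \<in> D)"

lemma downset_seq:
  assumes D: "downset D" and ne: "D \<noteq> {}"
  obtains d :: "nat \<Rightarrow> real" where "incseq d" "\<And>k. d k \<in> D" "D = (\<Union>k. {..d k})"
proof (cases "bdd_above D")
  case True
  define s where "s = Sup D"
  have ub: "x \<le> s" if "x \<in> D" for x using cSup_upper[OF that True] s_def by simp
  show ?thesis
  proof (cases "s \<in> D")
    case True
    show ?thesis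
    proof (rule that[of "\<lambda>k. s"])
      show "incseq (\<lambda>k. s)" by (simp add: incseq_def)
      show "s \<in> D" for k::nat using True .
      show "D = (\<Union>k. {..s})" using ub True D unfolding downset_def by blast
    qed
  next
    case False
    have mem: "s - 1 / (real k + 1) \<in> D" for k
    proof -
      have "s - 1 / (real k + 1) < Sup D" using s_def by (simp add: field_simps)
      then obtain y where "y \<in> D" "s - 1 / (real k + 1) < y"
        using less_cSup_iff[OF ne True] by blast
      then show ?thesis using D unfolding downset_def by (meson less_imp_le)
    qed
    show ?thesis
    proof (rule that[of "\<lambda>k. s - 1 / (real k + 1)"])
      show "incseq (\<lambda>k. s - 1 / (real k + 1))"
        by (intro incseq_SucI) (simp add: field_simps frac_le)
      show "s - 1 / (real k + 1) \<in> D" for k using mem .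
      show "D = (\<Union>k. {..s - 1 / (real k + 1)})"
      proof
        show "D \<subseteq> (\<Union>k. {..s - 1 / (real k + 1)})"
        proof
          fix x assume x: "x \<in> D"
          then have "x < s" using ub[OF x] False x by (cases "x = s") auto
          then obtain k :: nat where k: "1 / (s - x) < real k" using reals_Archimedean2 by blast
          have "0 < s - x" using \<open>x < s\<close> by simp
          then have "1 < real k * (s - x)" using k by (simp add: field_simps)
          then have "1 / (real k + 1) \<le> s - x"
            using \<open>0 < s - x\<close> by (simp add: field_simps)
          then have "x \<le> s - 1 / (real k + 1)" by simp
          then show "x \<in> (\<Union>k. {..s - 1 / (real k + 1)})" by blast
        qed
        show "(\<Union>k. {..s - 1 / (real k + 1)}) \<subseteq> D"
          using mem D unfolding downset_def by blast
      qed
    qed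
  qed
next
  case False
  have mem: "real k \<in> D" for k
  proof -
    obtain y where "y \<in> D" "real k < y" using False unfolding bdd_above_def by (meson not_le)
    then show ?thesis using D unfolding downset_def by (meson less_imp_le)
  qed
  show ?thesis
  proof (rule that[of "\<lambda>k. real k"])
    show "incseq (\<lambda>k. real k)" by (simp add: incseq_def)
    show "real k \<in> D" for k using mem .
    show "D = (\<Union>k. {..real k})"
    proof
      show "D \<subseteq> (\<Union>k. {..real k})"
        using real_arch_simple by fastforce
      show "(\<Union>k. {..real k}) \<subseteq> D" using mem D unfolding downset_def by blast
    qed
  qed
qed

lemma set_borel2:
  assumes "Measurable.pred (borel \<Otimes>\<^sub>M borel) (R :: real \<times> real \<Rightarrow> bool)"
  shows "{x. R x} \<in> sets borel"
  using assms unfolding pred_def borel_prod by simp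

locale two = P: prob_space P + Q: prob_space Q for P Q :: "(real \<times> real) measure" +
  assumes sP: "sets P = sets borel" and sQ: "sets Q = sets borel"
    and lo: "\<And>s t. measure P {x. fst x \<le> s \<and> snd x \<le> t} \<le> measure Q {x. fst x \<le> s \<and> snd x \<le> t}"
begin

lemma spP[simp]: "space P = UNIV" using sets_eq_imp_space_eq[OF sP] by simp
lemma spQ[simp]: "space Q = UNIV" using sets_eq_imp_space_eq[OF sQ] by simp

lemma mP[measurable_cong]: "sets P = sets borel" by (rule sP)

lemma orth:
  assumes D1: "downset D1" and D2: "downset D2"
  shows "measure P {x. fst x \<in> D1 \<and> snd x \<in> D2} \<le> measure Q {x. fst x \<in> D1 \<and> snd x \<in> D2}"
proof (cases "D1 = {} \<or> D2 = {}")
  case True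
  then have E: "{x. fst x \<in> D1 \<and> snd x \<in> D2} = {}" by blast
  show ?thesis unfolding E by simp
next
  case False
  then have ne1: "D1 \<noteq> {}" and ne2: "D2 \<noteq> {}" by auto
  obtain d1 where d1: "incseq d1" "\<And>k. d1 k \<in> D1" "D1 = (\<Union>k. {..d1 k})"
    using downset_seq[OF D1 ne1] by blast
  obtain d2 where d2: "incseq d2" "\<And>k. d2 k \<in> D2" "D2 = (\<Union>k. {..d2 k})"
    using downset_seq[OF D2 ne2] by blast
  define A where "A k = {x::real\<times>real. fst x \<le> d1 k \<and> snd x \<le> d2 k}" for k
  have incA: "incseq A" using d1(1) d2(1) unfolding A_def incseq_def
    by (auto intro: order_trans)
  have UA: "(\<Union>k. A k) = {x. fst x \<in> D1 \<and> snd x \<in> D2}"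
  proof
    show "(\<Union>k. A k) \<subseteq> {x. fst x \<in> D1 \<and> snd x \<in> D2}"
      unfolding A_def using d1(3) d2(3) by blast
    show "{x. fst x \<in> D1 \<and> snd x \<in> D2} \<subseteq> (\<Union>k. A k)"
    proof
      fix x assume "x \<in> {x. fst x \<in> D1 \<and> snd x \<in> D2}"
      then obtain i j where "fst x \<le> d1 i" "snd x \<le> d2 j" using d1(3) d2(3) by auto
      then have "fst x \<le> d1 (max i j)" "snd x \<le> d2 (max i j)"
        using d1(1) d2(1) unfolding incseq_def by (meson max.cobounded1 max.cobounded2 order_trans)+
      then show "x \<in> (\<Union>k. A k)" unfolding A_def by blast
    qed
  qed
  have mA: "A k \<in> sets borel" for k unfolding A_def by (rule set_borel2) measurable
  have "(\<lambda>k. measure P (A k)) \<longlonglongrightarrow> measure P (\<Union>k. A k)"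
    by (rule P.finite_Lim_measure_incseq) (use mA sP incA in auto)
  moreover have "(\<lambda>k. measure Q (A k)) \<longlonglongrightarrow> measure Q (\<Union>k. A k)"
    by (rule Q.finite_Lim_measure_incseq) (use mA sQ incA in auto)
  moreover have "measure P (A k) \<le> measure Q (A k)" for k unfolding A_def by (rule lo)
  ultimately show ?thesis unfolding UA[symmetric] by (intro LIMSEQ_le) auto
qed

end

lemma layer_cake:
  assumes sf: "sigma_finite_measure M" and hm: "h \<in> borel_measurable M"
    and hn: "\<And>x. x \<in> space M \<Longrightarrow> 0 \<le> h x"
  shows "(\<integral>\<^sup>+x. ennreal (h x) \<partial>M) =
    (\<integral>\<^sup>+c. indicator {0..} c * emeasure M {x \<in> space M. c < h x} \<partial>lborel)"
proof -
  interpret pair_sigma_finite M lborel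
    using sf by (simp add: pair_sigma_finite_def lborel.sigma_finite_measure_axioms)
  have "(\<integral>\<^sup>+x. ennreal (h x) \<partial>M) = (\<integral>\<^sup>+x. (\<integral>\<^sup>+c. indicator {0..<h x} c \<partial>lborel) \<partial>M)"
    using hn by (intro nn_integral_cong) simp
  also have "\<dots> = (\<integral>\<^sup>+c. (\<integral>\<^sup>+x. indicator {0..<h x} c \<partial>M) \<partial>lborel)"
  proof (rule Fubini'[symmetric])
    have "(\<lambda>(x, c). indicator {0..<h x} c :: ennreal) = (\<lambda>p. if 0 \<le> snd p \<and> snd p < h (fst p) then 1 else 0)"
      by (auto simp: indicator_def fun_eq_iff)
    moreover have "(\<lambda>p. if 0 \<le> snd p \<and> snd p < h (fst p) then 1 else 0 :: ennreal) \<in> borel_measurable (M \<Otimes>\<^sub>M lborel)"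
      using hm by measurable
    ultimately show "(\<lambda>(x, c). indicator {0..<h x} c :: ennreal) \<in> borel_measurable (M \<Otimes>\<^sub>M lborel)"
      by simp
  qed
  also have "\<dots> = (\<integral>\<^sup>+c. indicator {0..} c * emeasure M {x \<in> space M. c < h x} \<partial>lborel)"
  proof (rule nn_integral_cong)
    fix c :: real
    have mS: "{x \<in> space M. c < h x} \<in> sets M" using hm by measurable
    show "(\<integral>\<^sup>+x. indicator {0..<h x} c \<partial>M) = indicator {0..} c * emeasure M {x \<in> space M. c < h x}"
    proof (cases "0 \<le> c")
      case True
      have "(\<integral>\<^sup>+x. indicator {0..<h x} c \<partial>M) = (\<integral>\<^sup>+x. indicator {x \<in> space M. c < h x} x \<partial>M)"
        using True by (intro nn_integral_cong) (auto simp: indicator_def)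
      then show ?thesis using True mS by simp
    next
      case False
      then show ?thesis by (simp add: indicator_def)
    qed
  qed
  finally show ?thesis .
qed

lemma borel_antimono:
  fixes f :: "real \<Rightarrow> real"
  assumes "\<And>x y. x \<le> y \<Longrightarrow> f y \<le> f x"
  shows "f \<in> borel_measurable borel"
proof -
  have "mono (\<lambda>x. - f x)" using assms by (simp add: mono_def)
  then have "(\<lambda>x. - f x) \<in> borel_measurable borel" by (rule borel_measurable_mono)
  then have "(\<lambda>x. - (- f x)) \<in> borel_measurable borel" by measurable
  then show ?thesis by simp
qed

lemma meas_antimono:
  fixes f :: "'a \<Rightarrow> real"
  assumes "finite_measure M" and fm: "f \<in> borel_measurable M"
  shows "(\<lambda>c. emeasure M {x \<in> space M. c < f x}) \<in> borel_measurable borel"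
proof -
  interpret finite_measure M by fact
  define g where "g c = measure M {x \<in> space M. c < f x}" for c
  have "g \<in> borel_measurable borel"
  proof (rule borel_antimono)
    fix c d :: real assume "c \<le> d"
    then show "g d \<le> g c"
      unfolding g_def using fm by (intro finite_measure_mono) auto
  qed
  then have "(\<lambda>c. measure M {x \<in> space M. c < f x}) \<in> borel_measurable borel"
    unfolding g_def by simp
  then have "(\<lambda>c. ennreal (measure M {x \<in> space M. c < f x})) \<in> borel_measurable borel"
    by measurable
  moreover have "emeasure M {x \<in> space M. c < f x} = ennreal (measure M {x \<in> space M. c < f x})" for c
    using fm by (intro emeasure_eq_measure)
  ultimately show ?thesis by simp
qed

context two begin

lemma gpart:
  assumes Gmono: "mono G" and Gb: "\<And>s. \<bar>G s\<bar> \<le> B"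
    and Em[measurable]: "E \<in> borel_measurable borel" and En: "\<And>c. 0 \<le> E c"
    and Eb: "\<And>c. 0 \<le> c \<Longrightarrow> measure P {x. fst x \<in> {s. G s + B \<le> c} \<and> snd x \<in> UNIV} + E c
                \<le> measure Q {x. fst x \<in> {s. G s + B \<le> c} \<and> snd x \<in> UNIV}"
  shows "(\<integral>\<^sup>+x. ennreal (G (fst x) + B) \<partial>Q) + (\<integral>\<^sup>+c. indicator {0..} c * ennreal (E c) \<partial>lborel)
          \<le> (\<integral>\<^sup>+x. ennreal (G (fst x) + B) \<partial>P)"
proof -
  have sP'[measurable_cong]: "sets P = sets (borel \<Otimes>\<^sub>M borel)" by (simp only: sP borel_prod)
  have sQ'[measurable_cong]: "sets Q = sets (borel \<Otimes>\<^sub>M borel)" by (simp only: sQ borel_prod)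
  have Gm[measurable]: "G \<in> borel_measurable borel" using Gmono by (rule borel_measurable_mono)
  have hP: "(\<lambda>x. G (fst x) + B) \<in> borel_measurable P" by measurable
  have hQ: "(\<lambda>x. G (fst x) + B) \<in> borel_measurable Q" by measurable
  have hn: "0 \<le> G s + B" for s using Gb[of s] by linarith
  have dD: "downset {s. G s + B \<le> c}" for c
    unfolding downset_def using Gmono by (auto simp: mono_def) (smt (verit))
  have dU: "downset UNIV" by (simp add: downset_def)
  have LP: "(\<integral>\<^sup>+x. ennreal (G (fst x) + B) \<partial>P) =
      (\<integral>\<^sup>+c. indicator {0..} c * emeasure P {x \<in> space P. c < G (fst x) + B} \<partial>lborel)"
    by (rule layer_cake[OF _ hP]) (auto simp: hn P.sigma_finite_measure_axioms)
  have LQ: "(\<integral>\<^sup>+x. ennreal (G (fst x) + B) \<partial>Q) =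
      (\<integral>\<^sup>+c. indicator {0..} c * emeasure Q {x \<in> space Q. c < G (fst x) + B} \<partial>lborel)"
    by (rule layer_cake[OF _ hQ]) (auto simp: hn Q.sigma_finite_measure_axioms)
  have mQ: "(\<lambda>c. emeasure Q {x \<in> space Q. c < G (fst x) + B}) \<in> borel_measurable borel"
    by (rule meas_antimono[OF _ hQ]) (simp add: Q.finite_measure_axioms)
  have pt: "indicator {0..} c * emeasure Q {x \<in> space Q. c < G (fst x) + B} + indicator {0..} c * ennreal (E c)
      \<le> indicator {0..} c * emeasure P {x \<in> space P. c < G (fst x) + B}" for c
  proof (cases "0 \<le> c")
    case True
    define S where "S = {x. fst x \<in> {s. G s + B \<le> c} \<and> snd x \<in> (UNIV::real set)}"
    have SP: "S \<in> sets P" unfolding S_def by (simp add: sP) (rule set_borel2, measurable)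
    have SQ: "S \<in> sets Q" using SP sP sQ by simp
    have cP: "{x \<in> space P. c < G (fst x) + B} = space P - S" unfolding S_def by auto
    have cQ: "{x \<in> space Q. c < G (fst x) + B} = space Q - S" unfolding S_def by auto
    have eP: "emeasure P {x \<in> space P. c < G (fst x) + B} = ennreal (1 - measure P S)"
      unfolding cP using SP P.prob_compl[OF SP] by (simp add: P.emeasure_eq_measure)
    have eQ: "emeasure Q {x \<in> space Q. c < G (fst x) + B} = ennreal (1 - measure Q S)"
      unfolding cQ using SQ Q.prob_compl[OF SQ] by (simp add: Q.emeasure_eq_measure)
    have ineq: "measure P S + E c \<le> measure Q S" using Eb[OF True] unfolding S_def .
    have "ennreal (1 - measure Q S) + ennreal (E c) = ennreal (1 - measure Q S + E c)"
      using En[of c] by (simp add: ennreal_plus Q.prob_le_1)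
    also have "\<dots> \<le> ennreal (1 - measure P S)" using ineq by (intro ennreal_leI) linarith
    finally show ?thesis using True eP eQ by simp
  next
    case False
    then show ?thesis by simp
  qed
  have "(\<integral>\<^sup>+x. ennreal (G (fst x) + B) \<partial>Q) + (\<integral>\<^sup>+c. indicator {0..} c * ennreal (E c) \<partial>lborel)
     = (\<integral>\<^sup>+c. indicator {0..} c * emeasure Q {x \<in> space Q. c < G (fst x) + B} + indicator {0..} c * ennreal (E c) \<partial>lborel)"
    unfolding LQ using mQ by (intro nn_integral_add[symmetric]) auto
  also have "\<dots> \<le> (\<integral>\<^sup>+c. indicator {0..} c * emeasure P {x \<in> space P. c < G (fst x) + B} \<partial>lborel)"
    by (intro nn_integral_mono pt)
  finally show ?thesis unfolding LP .
qed

end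

context two begin

lemma kpart:
  assumes km[measurable]: "case_prod \<kappa> \<in> borel_measurable (borel \<Otimes>\<^sub>M borel)"
    and kn: "\<And>s t. 0 \<le> \<kappa> s t"
    and E2m[measurable]: "case_prod E2 \<in> borel_measurable (borel \<Otimes>\<^sub>M borel)"
    and E2n: "\<And>t c. 0 \<le> E2 t c"
    and E2b: "\<And>t c. 0 \<le> c \<Longrightarrow> measure P {x. fst x \<in> {s. c < \<kappa> s t} \<and> snd x \<in> {..t}} + E2 t c
               \<le> measure Q {x. fst x \<in> {s. c < \<kappa> s t} \<and> snd x \<in> {..t}}"
  shows "(\<integral>\<^sup>+x. (\<integral>\<^sup>+t. ennreal (\<kappa> (fst x) t) * indicator {snd x..} t \<partial>lborel) \<partial>P)
       + (\<integral>\<^sup>+t. (\<integral>\<^sup>+c. indicator {0..} c * ennreal (E2 t c) \<partial>lborel) \<partial>lborel)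
       \<le> (\<integral>\<^sup>+x. (\<integral>\<^sup>+t. ennreal (\<kappa> (fst x) t) * indicator {snd x..} t \<partial>lborel) \<partial>Q)"
proof -
  have sP'[measurable_cong]: "sets P = sets (borel \<Otimes>\<^sub>M borel)" by (simp only: sP borel_prod)
  have sQ'[measurable_cong]: "sets Q = sets (borel \<Otimes>\<^sub>M borel)" by (simp only: sQ borel_prod)
  define h where "h t x = (if snd x \<le> t then \<kappa> (fst x) t else 0)" for t :: real and x :: "real \<times> real"
  have hn: "0 \<le> h t x" for t x unfolding h_def using kn by simp
  have eqh: "ennreal (\<kappa> (fst x) t) * indicator {snd x..} t = ennreal (h t x)" for x t
    unfolding h_def by (simp add: indicator_def)
  have hm2[measurable]: "(\<lambda>p. h (snd p) (fst p)) \<in> borel_measurable (M \<Otimes>\<^sub>M lborel)"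
    if [measurable_cong]: "sets M = sets (borel \<Otimes>\<^sub>M borel)" for M :: "(real \<times> real) measure"
    unfolding h_def by measurable
  have hm3[measurable]: "(\<lambda>p. h (fst p) (snd p)) \<in> borel_measurable (lborel \<Otimes>\<^sub>M M)"
    if [measurable_cong]: "sets M = sets (borel \<Otimes>\<^sub>M borel)" for M :: "(real \<times> real) measure"
    unfolding h_def by measurable
  have hm1: "h t \<in> borel_measurable M"
    if [measurable_cong]: "sets M = sets (borel \<Otimes>\<^sub>M borel)" for M :: "(real \<times> real) measure" and t
    unfolding h_def by measurable
  have swap: "(\<integral>\<^sup>+x. (\<integral>\<^sup>+t. ennreal (h t x) \<partial>lborel) \<partial>M) = (\<integral>\<^sup>+t. (\<integral>\<^sup>+x. ennreal (h t x) \<partial>M) \<partial>lborel)"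
    if "prob_space M" "sets M = sets (borel \<Otimes>\<^sub>M borel)" for M :: "(real \<times> real) measure"
  proof -
    interpret prob_space M by fact
    interpret pair_sigma_finite M lborel
      by (simp add: pair_sigma_finite_def lborel.sigma_finite_measure_axioms sigma_finite_measure_axioms)
    show ?thesis
      by (rule Fubini'[symmetric]) (use hm2[OF that(2)] in simp)
  qed
  have LP: "(\<integral>\<^sup>+x. ennreal (h t x) \<partial>P) =
      (\<integral>\<^sup>+c. indicator {0..} c * emeasure P {x \<in> space P. c < h t x} \<partial>lborel)" for t
    by (rule layer_cake[OF _ hm1[OF sP']]) (auto simp: hn P.sigma_finite_measure_axioms)
  have LQ: "(\<integral>\<^sup>+x. ennreal (h t x) \<partial>Q) =
      (\<integral>\<^sup>+c. indicator {0..} c * emeasure Q {x \<in> space Q. c < h t x} \<partial>lborel)" for t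
    by (rule layer_cake[OF _ hm1[OF sQ']]) (auto simp: hn Q.sigma_finite_measure_axioms)
  have mP: "(\<lambda>c. emeasure P {x \<in> space P. c < h t x}) \<in> borel_measurable borel" for t
    by (rule meas_antimono[OF _ hm1[OF sP']]) (simp add: P.finite_measure_axioms)
  have pt: "indicator {0..} c * emeasure P {x \<in> space P. c < h t x} + indicator {0..} c * ennreal (E2 t c)
      \<le> indicator {0..} c * emeasure Q {x \<in> space Q. c < h t x}" for t c
  proof (cases "0 \<le> c")
    case True
    define S where "S = {x. fst x \<in> {s. c < \<kappa> s t} \<and> snd x \<in> {..t}}"
    have SP: "S \<in> sets P" unfolding S_def by (simp add: sP) (rule set_borel2, measurable)
    have SQ: "S \<in> sets Q" using SP sP sQ by simp
    have cP: "{x \<in> space P. c < h t x} = S" unfolding S_def h_def using True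
      by (auto simp: indicator_def)
    have cQ: "{x \<in> space Q. c < h t x} = S" unfolding S_def h_def using True
      by (auto simp: indicator_def)
    have ineq: "measure P S + E2 t c \<le> measure Q S" using E2b[OF True] unfolding S_def .
    have "emeasure P S + ennreal (E2 t c) = ennreal (measure P S + E2 t c)"
      using E2n[of t c] SP by (simp add: ennreal_plus P.emeasure_eq_measure)
    also have "\<dots> \<le> emeasure Q S" using ineq SQ by (simp add: Q.emeasure_eq_measure ennreal_leI)
    finally show ?thesis using True cP cQ by simp
  next
    case False
    then show ?thesis by simp
  qed
  have pt2: "(\<integral>\<^sup>+x. ennreal (h t x) \<partial>P) + (\<integral>\<^sup>+c. indicator {0..} c * ennreal (E2 t c) \<partial>lborel)
      \<le> (\<integral>\<^sup>+x. ennreal (h t x) \<partial>Q)" for t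
  proof -
    have "(\<integral>\<^sup>+x. ennreal (h t x) \<partial>P) + (\<integral>\<^sup>+c. indicator {0..} c * ennreal (E2 t c) \<partial>lborel)
      = (\<integral>\<^sup>+c. indicator {0..} c * emeasure P {x \<in> space P. c < h t x} + indicator {0..} c * ennreal (E2 t c) \<partial>lborel)"
      unfolding LP using mP[of t] by (intro nn_integral_add[symmetric]) auto
    also have "\<dots> \<le> (\<integral>\<^sup>+c. indicator {0..} c * emeasure Q {x \<in> space Q. c < h t x} \<partial>lborel)"
      by (intro nn_integral_mono pt)
    finally show ?thesis unfolding LQ .
  qed
  have mt: "(\<lambda>t. \<integral>\<^sup>+x. ennreal (h t x) \<partial>P) \<in> borel_measurable lborel"
  proof -
    interpret pair_sigma_finite lborel P
      by (simp add: pair_sigma_finite_def lborel.sigma_finite_measure_axioms P.sigma_finite_measure_axioms)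
    show ?thesis using hm3[OF sP'] by measurable
  qed
  have "(\<integral>\<^sup>+x. (\<integral>\<^sup>+t. ennreal (\<kappa> (fst x) t) * indicator {snd x..} t \<partial>lborel) \<partial>P)
       + (\<integral>\<^sup>+t. (\<integral>\<^sup>+c. indicator {0..} c * ennreal (E2 t c) \<partial>lborel) \<partial>lborel)
       = (\<integral>\<^sup>+t. (\<integral>\<^sup>+x. ennreal (h t x) \<partial>P) + (\<integral>\<^sup>+c. indicator {0..} c * ennreal (E2 t c) \<partial>lborel) \<partial>lborel)"
    unfolding eqh swap[OF P.prob_space_axioms sP'] using mt
    by (intro nn_integral_add[symmetric]) auto
  also have "\<dots> \<le> (\<integral>\<^sup>+t. (\<integral>\<^sup>+x. ennreal (h t x) \<partial>Q) \<partial>lborel)"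
    by (intro nn_integral_mono pt2)
  also have "\<dots> = (\<integral>\<^sup>+x. (\<integral>\<^sup>+t. ennreal (\<kappa> (fst x) t) * indicator {snd x..} t \<partial>lborel) \<partial>Q)"
    unfolding eqh swap[OF Q.prob_space_axioms sQ'] ..
  finally show ?thesis .
qed

end

locale core = two +
  fixes w :: "real \<times> real \<Rightarrow> real" and G :: "real \<Rightarrow> real" and \<kappa> :: "real \<Rightarrow> real \<Rightarrow> real" and B :: real
  assumes wm: "w \<in> borel_measurable borel"
    and Gmono: "mono G"
    and km: "case_prod \<kappa> \<in> borel_measurable (borel \<Otimes>\<^sub>M borel)"
    and kn: "\<And>s t. 0 \<le> \<kappa> s t"
    and kanti: "\<And>s s' t. s \<le> s' \<Longrightarrow> \<kappa> s' t \<le> \<kappa> s t"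
    and wb: "\<And>x. \<bar>w x\<bar> \<le> B" and Gb: "\<And>s. \<bar>G s\<bar> \<le> B"
    and Gw: "\<And>s z. w (s, z) \<le> G s"
    and rep: "\<And>s z. ennreal (G s - w (s, z)) = (\<integral>\<^sup>+t. ennreal (\<kappa> s t) * indicator {z..} t \<partial>lborel)"
begin

lemma sP'[measurable_cong]: "sets P = sets (borel \<Otimes>\<^sub>M borel)" by (simp only: sP borel_prod)
lemma sQ'[measurable_cong]: "sets Q = sets (borel \<Otimes>\<^sub>M borel)" by (simp only: sQ borel_prod)
lemma wm'[measurable]: "w \<in> borel_measurable (borel \<Otimes>\<^sub>M borel)" using wm by (simp only: borel_prod)
lemma Gm[measurable]: "G \<in> borel_measurable borel" using Gmono by (rule borel_measurable_mono)
lemmas km' [measurable] = km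

lemma setP: "Measurable.pred (borel \<Otimes>\<^sub>M borel) R \<Longrightarrow> {x. R x} \<in> sets P"
  unfolding sP by (rule set_borel2)
lemma setQ: "Measurable.pred (borel \<Otimes>\<^sub>M borel) R \<Longrightarrow> {x. R x} \<in> sets Q"
  unfolding sQ by (rule set_borel2)

lemma integ_conv:
  assumes "prob_space M" "sets M = sets (borel \<Otimes>\<^sub>M borel)"
  shows "integrable M (\<lambda>x. G (fst x) + B)" "integrable M (\<lambda>x. G (fst x) - w x)" "integrable M w"
    "(\<integral>\<^sup>+x. ennreal (G (fst x) + B) \<partial>M) = ennreal (\<integral>x. G (fst x) + B \<partial>M)"
    "(\<integral>\<^sup>+x. (\<integral>\<^sup>+t. ennreal (\<kappa> (fst x) t) * indicator {snd x..} t \<partial>lborel) \<partial>M)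
       = ennreal (\<integral>x. G (fst x) - w x \<partial>M)"
    "(\<integral>x. w x \<partial>M) = (\<integral>x. G (fst x) + B \<partial>M) - (\<integral>x. G (fst x) - w x \<partial>M) - B"
proof -
  interpret prob_space M by fact
  note assms(2)[measurable_cong]
  have b1: "norm (G (fst x) + B) \<le> 2 * B" for x
    using Gb[of "fst x"] by (simp add: abs_le_iff) 
  have b2: "norm (G (fst x) - w x) \<le> 2 * B" for x
    using Gb[of "fst x"] wb[of x] by (simp add: abs_le_iff) 
  have b3: "norm (w x) \<le> B" for x
    using wb[of x] by simp
  show i1: "integrable M (\<lambda>x. G (fst x) + B)"
    apply (rule integrable_const_bound[where B="2*B"])
    using b1 apply (intro AE_I2) apply blast
    by measurable
  show i2: "integrable M (\<lambda>x. G (fst x) - w x)"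
    apply (rule integrable_const_bound[where B="2*B"])
    using b2 apply (intro AE_I2) apply blast
    by measurable
  show i3: "integrable M w"
    apply (rule integrable_const_bound[where B="B"])
    using b3 apply (intro AE_I2) apply blast
    by measurable
  have n1: "0 \<le> G s + B" for s using Gb[of s] by linarith
  have n2: "0 \<le> G (fst x) - w x" for x using Gw[of "fst x" "snd x"] by simp
  show "(\<integral>\<^sup>+x. ennreal (G (fst x) + B) \<partial>M) = ennreal (\<integral>x. G (fst x) + B \<partial>M)"
    using i1 n1 by (intro nn_integral_eq_integral) auto
  have "(\<integral>\<^sup>+x. (\<integral>\<^sup>+t. ennreal (\<kappa> (fst x) t) * indicator {snd x..} t \<partial>lborel) \<partial>M)
      = (\<integral>\<^sup>+x. ennreal (G (fst x) - w x) \<partial>M)"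
  proof (intro nn_integral_cong)
    fix x :: "real \<times> real"
    show "(\<integral>\<^sup>+t. ennreal (\<kappa> (fst x) t) * indicator {snd x..} t \<partial>lborel) = ennreal (G (fst x) - w x)"
      using rep[of "fst x" "snd x"] by simp
  qed
  also have "\<dots> = ennreal (\<integral>x. G (fst x) - w x \<partial>M)"
    using i2 n2 by (intro nn_integral_eq_integral) auto
  finally show "(\<integral>\<^sup>+x. (\<integral>\<^sup>+t. ennreal (\<kappa> (fst x) t) * indicator {snd x..} t \<partial>lborel) \<partial>M)
       = ennreal (\<integral>x. G (fst x) - w x \<partial>M)" .
  have "(\<integral>x. G (fst x) + B \<partial>M) - (\<integral>x. G (fst x) - w x \<partial>M) = (\<integral>x. (G (fst x) + B) - (G (fst x) - w x) \<partial>M)"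
    using Bochner_Integration.integral_diff[OF i1 i2] by simp
  also have "\<dots> = (\<integral>x. w x + B \<partial>M)" by (simp add: add.commute)
  also have "\<dots> = (\<integral>x. w x \<partial>M) + B" using Bochner_Integration.integral_add[OF i3 integrable_const[of B]] by (simp add: prob_space)
  finally show "(\<integral>x. w x \<partial>M) = (\<integral>x. G (fst x) + B \<partial>M) - (\<integral>x. G (fst x) - w x \<partial>M) - B" by simp
qed

end

lemma enn_add_le:
  fixes x y z :: real
  assumes "0 \<le> x" "0 \<le> y" "0 \<le> z" "ennreal x + ennreal y \<le> ennreal z"
  shows "x + y \<le> z"
  using assms by (simp add: ennreal_plus[symmetric] del: ennreal_plus)

context core begin

lemma dU: "downset UNIV" by (simp add: downset_def)
lemma dAt: "downset {..t}" by (auto simp: downset_def)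
lemma dG: "downset {s. G s + B \<le> c}"
  unfolding downset_def using Gmono by (auto simp: mono_def) (smt (verit))
lemma dK: "downset {s. c < \<kappa> s t}"
  unfolding downset_def using kanti by (auto intro: less_le_trans)

lemma Gw': "w x \<le> G (fst x)" using Gw[of "fst x" "snd x"] by simp

lemma Gab: "a \<le> a' \<Longrightarrow> G a \<le> G a'" using Gmono by (simp add: mono_def)
lemma GBn: "0 \<le> G s + B" using Gb[of s] by linarith

lemma C1:
  assumes aa: "a \<le> a'" and eta: "0 \<le> \<eta>"
    and cond: "measure P {x. fst x \<le> a'} + \<eta> \<le> measure Q {x. fst x \<le> a \<and> snd x \<le> T}"
  shows "(\<integral>x. w x \<partial>Q) + \<eta> * (w (a', T) - w (a, T)) \<le> (\<integral>x. w x \<partial>P)"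
proof -
  define E where "E c = (if G a + B \<le> c \<and> c < G a' + B then \<eta> else 0)" for c
  have Em: "E \<in> borel_measurable borel" unfolding E_def by measurable
  have En: "0 \<le> E c" for c unfolding E_def using eta by simp
  have Eb: "measure P {x. fst x \<in> {s. G s + B \<le> c} \<and> snd x \<in> UNIV} + E c
                \<le> measure Q {x. fst x \<in> {s. G s + B \<le> c} \<and> snd x \<in> UNIV}" if "0 \<le> c" for c
  proof (cases "G a + B \<le> c \<and> c < G a' + B")
    case True
    define D where "D = {s. G s + B \<le> c}"
    have aD: "a \<in> D" using True D_def by simp
    have Dsub: "s \<le> a'" if "s \<in> D" for s
    proof (rule ccontr)
      assume "\<not> s \<le> a'"
      then have "G a' \<le> G s" using Gab by simp
      then show False using that True D_def by simp
    qed
    have "measure P {x. fst x \<in> D \<and> snd x \<in> UNIV} \<le> measure P {x. fst x \<le> a'}"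
      using Dsub by (intro P.finite_measure_mono) (auto intro!: setP)
    moreover have "measure Q {x. fst x \<le> a \<and> snd x \<le> T} \<le> measure Q {x. fst x \<in> D \<and> snd x \<in> UNIV}"
    proof (intro Q.finite_measure_mono)
      show "{x. fst x \<le> a \<and> snd x \<le> T} \<subseteq> {x. fst x \<in> D \<and> snd x \<in> UNIV}"
        using aD dG unfolding D_def downset_def by blast
      have EE: "{x. fst x \<in> D \<and> snd x \<in> UNIV} = {x. G (fst x) + B \<le> c}" unfolding D_def by simp
      have "{x. G (fst x) + B \<le> c} \<in> sets Q" by (intro setQ) measurable
      then show "{x. fst x \<in> D \<and> snd x \<in> UNIV} \<in> sets Q" unfolding EE .
    qed
    ultimately show ?thesis using cond True unfolding D_def E_def by simp
  next
    case False
    then have "E c = 0" unfolding E_def by auto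
    then show ?thesis using orth[OF dG dU] by simp
  qed
  have GP: "(\<integral>\<^sup>+x. ennreal (G (fst x) + B) \<partial>Q) + (\<integral>\<^sup>+c. indicator {0..} c * ennreal (E c) \<partial>lborel)
          \<le> (\<integral>\<^sup>+x. ennreal (G (fst x) + B) \<partial>P)"
    by (rule gpart[OF Gmono Gb Em En Eb])
  have "(\<integral>\<^sup>+c. indicator {0..} c * ennreal (E c) \<partial>lborel) =
        (\<integral>\<^sup>+c. ennreal \<eta> * indicator {G a + B..<G a' + B} c \<partial>lborel)"
    using GBn[of a] by (intro nn_integral_cong) (auto simp: E_def indicator_def)
  also have "\<dots> = ennreal \<eta> * ennreal (G a' - G a)"
    using Gab[OF aa] by (subst nn_integral_cmult_indicator) auto
  also have "\<dots> = ennreal (\<eta> * (G a' - G a))" using eta Gab[OF aa] by (simp add: ennreal_mult)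
  finally have Eint: "(\<integral>\<^sup>+c. indicator {0..} c * ennreal (E c) \<partial>lborel) = ennreal (\<eta> * (G a' - G a))" .
  define E2 where "E2 t c = (if T \<le> t \<and> \<kappa> a' t \<le> c \<and> c < \<kappa> a t then \<eta> else 0)" for t c
  have E2m: "case_prod E2 \<in> borel_measurable (borel \<Otimes>\<^sub>M borel)" unfolding E2_def by measurable
  have E2n: "0 \<le> E2 t c" for t c unfolding E2_def using eta by simp
  have E2b: "measure P {x. fst x \<in> {s. c < \<kappa> s t} \<and> snd x \<in> {..t}} + E2 t c
               \<le> measure Q {x. fst x \<in> {s. c < \<kappa> s t} \<and> snd x \<in> {..t}}" if "0 \<le> c" for t c
  proof (cases "T \<le> t \<and> \<kappa> a' t \<le> c \<and> c < \<kappa> a t")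
    case True
    define D where "D = {s. c < \<kappa> s t}"
    have aD: "a \<in> D" using True D_def by simp
    have Dsub: "s \<le> a'" if "s \<in> D" for s
    proof (rule ccontr)
      assume "\<not> s \<le> a'"
      then have "\<kappa> s t \<le> \<kappa> a' t" using kanti by simp
      then show False using that True D_def by simp
    qed
    have "measure P {x. fst x \<in> D \<and> snd x \<in> {..t}} \<le> measure P {x. fst x \<le> a'}"
    proof (intro P.finite_measure_mono)
      show "{x. fst x \<in> D \<and> snd x \<in> {..t}} \<subseteq> {x. fst x \<le> a'}" using Dsub by auto
      show "{x. fst x \<le> a'} \<in> sets P" by (intro setP) measurable
    qed
    moreover have "measure Q {x. fst x \<le> a \<and> snd x \<le> T} \<le> measure Q {x. fst x \<in> D \<and> snd x \<in> {..t}}"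
    proof (intro Q.finite_measure_mono)
      show "{x. fst x \<le> a \<and> snd x \<le> T} \<subseteq> {x. fst x \<in> D \<and> snd x \<in> {..t}}"
        using aD dK True unfolding D_def downset_def by auto
      have EE: "{x. fst x \<in> D \<and> snd x \<in> {..t}} = {x. c < \<kappa> (fst x) t \<and> snd x \<le> t}" unfolding D_def by auto
      have "{x. c < \<kappa> (fst x) t \<and> snd x \<le> t} \<in> sets Q" by (intro setQ) measurable
      then show "{x. fst x \<in> D \<and> snd x \<in> {..t}} \<in> sets Q" unfolding EE .
    qed
    ultimately show ?thesis using cond True unfolding D_def E2_def by simp
  next
    case False
    then have "E2 t c = 0" unfolding E2_def by auto
    then show ?thesis using orth[OF dK dAt] by simp
  qed
  have KP: "(\<integral>\<^sup>+x. (\<integral>\<^sup>+t. ennreal (\<kappa> (fst x) t) * indicator {snd x..} t \<partial>lborel) \<partial>P)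
       + (\<integral>\<^sup>+t. (\<integral>\<^sup>+c. indicator {0..} c * ennreal (E2 t c) \<partial>lborel) \<partial>lborel)
       \<le> (\<integral>\<^sup>+x. (\<integral>\<^sup>+t. ennreal (\<kappa> (fst x) t) * indicator {snd x..} t \<partial>lborel) \<partial>Q)"
    by (rule kpart[OF km kn E2m E2n E2b])
  define K where "K = (\<integral>\<^sup>+t. ennreal (\<kappa> a t - \<kappa> a' t) * indicator {T..} t \<partial>lborel)"
  have inner: "(\<integral>\<^sup>+c. indicator {0..} c * ennreal (E2 t c) \<partial>lborel)
      = ennreal \<eta> * (ennreal (\<kappa> a t - \<kappa> a' t) * indicator {T..} t)" for t
  proof -
    have "(\<integral>\<^sup>+c. indicator {0..} c * ennreal (E2 t c) \<partial>lborel)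
        = (\<integral>\<^sup>+c. (ennreal \<eta> * indicator {T..} t) * indicator {\<kappa> a' t..<\<kappa> a t} c \<partial>lborel)"
      using kn[of a' t] by (intro nn_integral_cong) (auto simp: E2_def indicator_def)
    also have "\<dots> = (ennreal \<eta> * indicator {T..} t) * ennreal (\<kappa> a t - \<kappa> a' t)"
      using kanti[OF aa, of t] by (subst nn_integral_cmult_indicator) auto
    finally show ?thesis by (simp add: ac_simps)
  qed
  have dbl: "(\<integral>\<^sup>+t. (\<integral>\<^sup>+c. indicator {0..} c * ennreal (E2 t c) \<partial>lborel) \<partial>lborel) = ennreal \<eta> * K"
    unfolding inner K_def by (rule nn_integral_cmult) measurable
  have splitK: "ennreal (G a - w (a, T)) = K + ennreal (G a' - w (a', T))"
  proof -
    have s1: "ennreal (\<kappa> a t) * indicator {T..} t = ennreal (\<kappa> a t - \<kappa> a' t) * indicator {T..} t + ennreal (\<kappa> a' t) * indicator {T..} t" for t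
    proof -
      have "ennreal (\<kappa> a t) = ennreal (\<kappa> a t - \<kappa> a' t) + ennreal (\<kappa> a' t)"
        using kanti[OF aa, of t] kn[of a' t] by (subst ennreal_plus[symmetric]) auto
      then show ?thesis by (metis distrib_right)
    qed
    have m1: "(\<lambda>t. ennreal (\<kappa> a t - \<kappa> a' t) * indicator {T..} t) \<in> borel_measurable lborel" by measurable
    have m2: "(\<lambda>t. ennreal (\<kappa> a' t) * indicator {T..} t) \<in> borel_measurable lborel" by measurable
    have "ennreal (G a - w (a, T)) = (\<integral>\<^sup>+t. ennreal (\<kappa> a t) * indicator {T..} t \<partial>lborel)" by (rule rep)
    also have "\<dots> = (\<integral>\<^sup>+t. ennreal (\<kappa> a t - \<kappa> a' t) * indicator {T..} t + ennreal (\<kappa> a' t) * indicator {T..} t \<partial>lborel)"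
      by (intro nn_integral_cong s1)
    also have "\<dots> = K + (\<integral>\<^sup>+t. ennreal (\<kappa> a' t) * indicator {T..} t \<partial>lborel)"
      unfolding K_def by (rule nn_integral_add[OF m1 m2])
    also have "\<dots> = K + ennreal (G a' - w (a', T))" by (simp only: rep[symmetric])
    finally show ?thesis .
  qed
  have Ktop: "K \<noteq> \<top>"
  proof
    assume "K = \<top>"
    then have "ennreal (G a - w (a, T)) = \<top>" using splitK by simp
    then show False by simp
  qed
  obtain k where k0: "0 \<le> k" and kK: "K = ennreal k" using Ktop by (cases K) auto
  have n1: "0 \<le> G a' - w (a', T)" using Gw[of a' T] by simp
  have n2: "0 \<le> G a - w (a, T)" using Gw[of a T] by simp
  have "ennreal (G a - w (a, T)) = ennreal (k + (G a' - w (a', T)))"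
    using splitK kK k0 n1 by (simp add: ennreal_plus)
  then have keq: "G a - w (a, T) = k + (G a' - w (a', T))"
    using n2 k0 n1 by (subst (asm) ennreal_inj) auto
  note cP = integ_conv[OF P.prob_space_axioms sP']
  note cQ = integ_conv[OF Q.prob_space_axioms sQ']
  have iPn: "0 \<le> (\<integral>x. G (fst x) + B \<partial>P)" using GBn by (intro Bochner_Integration.integral_nonneg) auto
  have iQn: "0 \<le> (\<integral>x. G (fst x) + B \<partial>Q)" using GBn by (intro Bochner_Integration.integral_nonneg) auto
  have jPn: "0 \<le> (\<integral>x. G (fst x) - w x \<partial>P)" using Gw' by (intro Bochner_Integration.integral_nonneg) simp
  have jQn: "0 \<le> (\<integral>x. G (fst x) - w x \<partial>Q)" using Gw' by (intro Bochner_Integration.integral_nonneg) simp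
  have g1: "(\<integral>x. G (fst x) + B \<partial>Q) + \<eta> * (G a' - G a) \<le> (\<integral>x. G (fst x) + B \<partial>P)"
    using GP unfolding Eint cP(4) cQ(4)
    by (intro enn_add_le) (use iPn iQn eta Gab[OF aa] in auto)
  have k1: "(\<integral>x. G (fst x) - w x \<partial>P) + \<eta> * k \<le> (\<integral>x. G (fst x) - w x \<partial>Q)"
    using KP unfolding dbl cP(5) cQ(5) kK
    by (intro enn_add_le) (use jPn jQn eta k0 in \<open>auto simp: ennreal_mult[symmetric]\<close>)
  have "\<eta> * (w (a', T) - w (a, T)) = \<eta> * (G a' - G a) + \<eta> * k"
  proof -
    have "w (a', T) - w (a, T) = (G a' - G a) + k" using keq by linarith
    then show ?thesis by (simp add: distrib_left)
  qed
  then show ?thesis using g1 k1 cP(6) cQ(6) by linarith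
qed

end

context core begin

lemma C2:
  assumes bb: "b \<le> b'" and eta: "0 \<le> \<eta>"
    and cond: "measure P {x. snd x \<le> b'} + \<eta> \<le> measure Q {x. fst x \<le> S \<and> snd x \<le> b}"
  shows "(\<integral>x. w x \<partial>Q) + \<eta> * (w (S, b') - w (S, b)) \<le> (\<integral>x. w x \<partial>P)"
proof -
  define E0 where "E0 (c::real) = (0::real)" for c
  have Em0: "E0 \<in> borel_measurable borel" unfolding E0_def by simp
  have En0: "0 \<le> E0 c" for c unfolding E0_def by simp
  have Eb0: "measure P {x. fst x \<in> {s. G s + B \<le> c} \<and> snd x \<in> UNIV} + E0 c
                \<le> measure Q {x. fst x \<in> {s. G s + B \<le> c} \<and> snd x \<in> UNIV}" if "0 \<le> c" for c
    unfolding E0_def using orth[OF dG dU] by simp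
  have GP: "(\<integral>\<^sup>+x. ennreal (G (fst x) + B) \<partial>Q) + (\<integral>\<^sup>+c. indicator {0..} c * ennreal (E0 c) \<partial>lborel)
          \<le> (\<integral>\<^sup>+x. ennreal (G (fst x) + B) \<partial>P)"
    by (rule gpart[OF Gmono Gb Em0 En0 Eb0])
  then have GP': "(\<integral>\<^sup>+x. ennreal (G (fst x) + B) \<partial>Q) \<le> (\<integral>\<^sup>+x. ennreal (G (fst x) + B) \<partial>P)" by (simp add: E0_def)
  define E2 where "E2 t c = (if b \<le> t \<and> t \<le> b' \<and> c < \<kappa> S t then \<eta> else 0)" for t c
  have E2m: "case_prod E2 \<in> borel_measurable (borel \<Otimes>\<^sub>M borel)" unfolding E2_def by measurable
  have E2n: "0 \<le> E2 t c" for t c unfolding E2_def using eta by simp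
  have E2b: "measure P {x. fst x \<in> {s. c < \<kappa> s t} \<and> snd x \<in> {..t}} + E2 t c
               \<le> measure Q {x. fst x \<in> {s. c < \<kappa> s t} \<and> snd x \<in> {..t}}" if "0 \<le> c" for t c
  proof (cases "b \<le> t \<and> t \<le> b' \<and> c < \<kappa> S t")
    case True
    define D where "D = {s. c < \<kappa> s t}"
    have SD: "S \<in> D" using True D_def by simp
    have "measure P {x. fst x \<in> D \<and> snd x \<in> {..t}} \<le> measure P {x. snd x \<le> b'}"
    proof (intro P.finite_measure_mono)
      show "{x. fst x \<in> D \<and> snd x \<in> {..t}} \<subseteq> {x. snd x \<le> b'}" using True by auto
      show "{x. snd x \<le> b'} \<in> sets P" by (intro setP) measurable
    qed
    moreover have "measure Q {x. fst x \<le> S \<and> snd x \<le> b} \<le> measure Q {x. fst x \<in> D \<and> snd x \<in> {..t}}"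
    proof (intro Q.finite_measure_mono)
      show "{x. fst x \<le> S \<and> snd x \<le> b} \<subseteq> {x. fst x \<in> D \<and> snd x \<in> {..t}}"
        using SD dK True unfolding D_def downset_def by auto
      have EE: "{x. fst x \<in> D \<and> snd x \<in> {..t}} = {x. c < \<kappa> (fst x) t \<and> snd x \<le> t}" unfolding D_def by auto
      have "{x. c < \<kappa> (fst x) t \<and> snd x \<le> t} \<in> sets Q" by (intro setQ) measurable
      then show "{x. fst x \<in> D \<and> snd x \<in> {..t}} \<in> sets Q" unfolding EE .
    qed
    ultimately show ?thesis using cond True unfolding D_def E2_def by simp
  next
    case False
    then have "E2 t c = 0" unfolding E2_def by auto
    then show ?thesis using orth[OF dK dAt] by simp
  qed
  have KP: "(\<integral>\<^sup>+x. (\<integral>\<^sup>+t. ennreal (\<kappa> (fst x) t) * indicator {snd x..} t \<partial>lborel) \<partial>P)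
       + (\<integral>\<^sup>+t. (\<integral>\<^sup>+c. indicator {0..} c * ennreal (E2 t c) \<partial>lborel) \<partial>lborel)
       \<le> (\<integral>\<^sup>+x. (\<integral>\<^sup>+t. ennreal (\<kappa> (fst x) t) * indicator {snd x..} t \<partial>lborel) \<partial>Q)"
    by (rule kpart[OF km kn E2m E2n E2b])
  define K where "K = (\<integral>\<^sup>+t. ennreal (\<kappa> S t) * indicator {b..b'} t \<partial>lborel)"
  have inner: "(\<integral>\<^sup>+c. indicator {0..} c * ennreal (E2 t c) \<partial>lborel)
      = ennreal \<eta> * (ennreal (\<kappa> S t) * indicator {b..b'} t)" for t
  proof -
    have "(\<integral>\<^sup>+c. indicator {0..} c * ennreal (E2 t c) \<partial>lborel)
        = (\<integral>\<^sup>+c. (ennreal \<eta> * indicator {b..b'} t) * indicator {0..<\<kappa> S t} c \<partial>lborel)"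
      by (intro nn_integral_cong) (auto simp: E2_def indicator_def)
    also have "\<dots> = (ennreal \<eta> * indicator {b..b'} t) * ennreal (\<kappa> S t)"
      using kn[of S t] by (subst nn_integral_cmult_indicator) auto
    finally show ?thesis by (simp add: ac_simps)
  qed
  have dbl: "(\<integral>\<^sup>+t. (\<integral>\<^sup>+c. indicator {0..} c * ennreal (E2 t c) \<partial>lborel) \<partial>lborel) = ennreal \<eta> * K"
    unfolding inner K_def by (rule nn_integral_cmult) measurable
  have m1: "(\<lambda>t. ennreal (\<kappa> S t) * indicator {b..b'} t) \<in> borel_measurable lborel" by measurable
  have m2: "(\<lambda>t. ennreal (\<kappa> S t) * indicator {b'..} t) \<in> borel_measurable lborel" by measurable
  have splitK: "ennreal (G S - w (S, b)) \<le> K + ennreal (G S - w (S, b'))"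
  proof -
    have "ennreal (G S - w (S, b)) = (\<integral>\<^sup>+t. ennreal (\<kappa> S t) * indicator {b..} t \<partial>lborel)" by (rule rep)
    also have "\<dots> \<le> (\<integral>\<^sup>+t. ennreal (\<kappa> S t) * indicator {b..b'} t + ennreal (\<kappa> S t) * indicator {b'..} t \<partial>lborel)"
      by (intro nn_integral_mono) (auto simp: indicator_def)
    also have "\<dots> = K + (\<integral>\<^sup>+t. ennreal (\<kappa> S t) * indicator {b'..} t \<partial>lborel)"
      unfolding K_def by (rule nn_integral_add[OF m1 m2])
    also have "\<dots> = K + ennreal (G S - w (S, b'))" by (simp only: rep[symmetric])
    finally show ?thesis .
  qed
  have Kle: "K \<le> ennreal (G S - w (S, b))"
    unfolding K_def rep by (intro nn_integral_mono) (auto simp: indicator_def)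
  have Ktop: "K \<noteq> \<top>"
  proof
    assume "K = \<top>"
    then show False using Kle by (simp add: top_unique)
  qed
  obtain k where k0: "0 \<le> k" and kK: "K = ennreal k" using Ktop by (cases K) auto
  have n1: "0 \<le> G S - w (S, b')" using Gw[of S b'] by simp
  have n2: "0 \<le> G S - w (S, b)" using Gw[of S b] by simp
  have "ennreal (G S - w (S, b)) \<le> ennreal (k + (G S - w (S, b')))"
    using splitK kK k0 n1 by (simp add: ennreal_plus)
  then have kle: "G S - w (S, b) \<le> k + (G S - w (S, b'))"
    using k0 n1 by (subst (asm) ennreal_le_iff) auto
  note cP = integ_conv[OF P.prob_space_axioms sP']
  note cQ = integ_conv[OF Q.prob_space_axioms sQ']
  have jPn: "0 \<le> (\<integral>x. G (fst x) - w x \<partial>P)" using Gw' by (intro Bochner_Integration.integral_nonneg) simp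
  have jQn: "0 \<le> (\<integral>x. G (fst x) - w x \<partial>Q)" using Gw' by (intro Bochner_Integration.integral_nonneg) simp
  have iQn: "0 \<le> (\<integral>x. G (fst x) + B \<partial>Q)" using GBn by (intro Bochner_Integration.integral_nonneg) auto
  have iPn: "0 \<le> (\<integral>x. G (fst x) + B \<partial>P)" using GBn by (intro Bochner_Integration.integral_nonneg) auto
  have g1: "(\<integral>x. G (fst x) + B \<partial>Q) \<le> (\<integral>x. G (fst x) + B \<partial>P)"
    using GP' unfolding cP(4) cQ(4) by (subst (asm) ennreal_le_iff) (use iPn in auto)
  have k1: "(\<integral>x. G (fst x) - w x \<partial>P) + \<eta> * k \<le> (\<integral>x. G (fst x) - w x \<partial>Q)"
    using KP unfolding dbl cP(5) cQ(5) kK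
    by (intro enn_add_le) (use jPn jQn eta k0 in \<open>auto simp: ennreal_mult[symmetric]\<close>)
  have "\<eta> * (w (S, b') - w (S, b)) \<le> \<eta> * k"
    using kle eta by (intro mult_left_mono) auto
  then show ?thesis using g1 k1 cP(6) cQ(6) by linarith
qed

end

lemma mono_tendsto_Sup:
  fixes g :: "real \<Rightarrow> real"
  assumes mg: "mono g" and bdd: "bdd_above (range g)"
  shows "(g \<longlongrightarrow> Sup (range g)) at_top"
proof (rule order_tendstoI)
  fix a assume "a < Sup (range g)"
  then obtain t where t: "a < g t" using less_cSup_iff[of "range g" a] bdd by auto
  have "\<forall>x\<ge>t. a < g x" using t mg by (auto simp: mono_def intro: less_le_trans)
  then show "eventually (\<lambda>x. a < g x) at_top" unfolding eventually_at_top_linorder by blast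
next
  fix a assume "Sup (range g) < a"
  moreover have "g x \<le> Sup (range g)" for x using bdd by (intro cSup_upper) auto
  ultimately show "eventually (\<lambda>x. g x < a) at_top" by (intro always_eventually) (auto intro: le_less_trans)
qed

lemma ftc1:
  fixes f f' :: "real \<Rightarrow> real" and n z :: real
  assumes smono: "\<And>s t. s < t \<Longrightarrow> f s < f t"
    and der: "\<And>t. DERIV f t :> f' t"
    and fn: "\<And>t. 0 \<le> f' t"
    and fm[measurable]: "f' \<in> borel_measurable borel"
  shows "(\<integral>\<^sup>+t. ennreal (if f t < n then f' t else 0) * indicator {z..} t \<partial>lborel)
         = ennreal (Sup (range (\<lambda>t. min (f t) n)) - min (f z) n)"
proof -
  have mf: "s \<le> t \<Longrightarrow> f s \<le> f t" for s t using smono by (cases "s = t") (auto intro: less_imp_le)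
  have bdd: "bdd_above (range (\<lambda>t. min (f t) n))" by (rule bdd_aboveI[of _ n]) auto
  have Lle: "Sup (range (\<lambda>t. min (f t) n)) \<le> n" by (rule cSup_least) auto
  have Lge: "min (f t) n \<le> Sup (range (\<lambda>t. min (f t) n))" for t using bdd by (intro cSup_upper) auto
  show ?thesis
  proof (cases "n \<le> f z")
    case True
    have z0: "ennreal (if f t < n then f' t else 0) * indicator {z..} t = 0" for t
      using True mf[of z t] by (auto simp: indicator_def)
    have "(\<integral>\<^sup>+t. ennreal (if f t < n then f' t else 0) * indicator {z..} t \<partial>lborel) = 0"
      by (simp only: z0) simp
    moreover have "Sup (range (\<lambda>t. min (f t) n)) = n" using Lle Lge[of z] True by simp
    ultimately show ?thesis using True by simp
  next
    case False
    then have fz: "f z < n" by simp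
    show ?thesis
    proof (cases "\<exists>t. n \<le> f t")
      case True
      then obtain t where t: "n \<le> f t" by blast
      have zt: "z \<le> t" using t fz mf[of t z] by (cases "z \<le> t") auto
      have cont: "\<forall>x. z \<le> x \<and> x \<le> t \<longrightarrow> isCont f x" using der DERIV_isCont by blast
      obtain \<tau> where tau: "z \<le> \<tau>" "\<tau> \<le> t" "f \<tau> = n"
        using IVT[of f z n t, OF less_imp_le[OF fz] t zt cont] by blast
      have "(\<integral>\<^sup>+x. ennreal (if f x < n then f' x else 0) * indicator {z..} x \<partial>lborel)
          = (\<integral>\<^sup>+x. ennreal (f' x) * indicator {z..\<tau>} x \<partial>lborel)"
      proof (rule nn_integral_cong_AE)
        show "AE x in lborel. ennreal (if f x < n then f' x else 0) * indicator {z..} x = ennreal (f' x) * indicator {z..\<tau>} x"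
          using AE_lborel_singleton[of \<tau>]
        proof (rule eventually_mono)
          fix x :: real assume "x \<noteq> \<tau>"
          show "ennreal (if f x < n then f' x else 0) * indicator {z..} x = ennreal (f' x) * indicator {z..\<tau>} x"
          proof (cases "x < \<tau>")
            case True
            then have "f x < n" using smono tau by auto
            then show ?thesis using True by (auto simp: indicator_def)
          next
            case False
            then have "\<tau> < x" using \<open>x \<noteq> \<tau>\<close> by simp
            then have "\<not> f x < n" using smono[of \<tau> x] tau by auto
            then show ?thesis using \<open>\<tau> < x\<close> by (auto simp: indicator_def)
          qed
        qed
      qed
      also have "\<dots> = ennreal (f \<tau> - f z)"
        using nn_integral_FTC_Icc[OF fm, of z \<tau> f] der fn tau by simp
      finally show ?thesis
        using Lle Lge[of \<tau>] tau fz by simp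
    next
      case False
      then have lt: "f t < n" for t by (simp add: not_le)
      have eqm: "(\<lambda>t. min (f t) n) = f" using lt by (simp add: fun_eq_iff less_imp_le)
      have lim: "(f \<longlongrightarrow> Sup (range (\<lambda>t. min (f t) n))) at_top"
        unfolding eqm using mono_tendsto_Sup[of f] bdd mf unfolding eqm by (auto simp: mono_def)
      have "(\<integral>\<^sup>+t. ennreal (if f t < n then f' t else 0) * indicator {z..} t \<partial>lborel)
          = (\<integral>\<^sup>+t. ennreal (f' t) * indicator {z..} t \<partial>lborel)" using lt by simp
      also have "\<dots> = ennreal (Sup (range (\<lambda>t. min (f t) n)) - f z)"
        using nn_integral_FTC_atLeast[OF fm, of z f, OF der fn lim] by simp
      finally show ?thesis using lt[of z] by simp
    qed
  qed
qed

locale ufun =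
  fixes u :: "real \<times> real \<Rightarrow> real" and u2 u12 :: "real \<Rightarrow> real \<Rightarrow> real"
  assumes si: "strictly_increasing2 u"
    and d2: "\<And>x1 x2. ((\<lambda>t. u (x1, t)) has_real_derivative u2 x1 x2) (at x2)"
    and d12: "\<And>x1 x2. ((\<lambda>s. u2 s x2) has_real_derivative u12 x1 x2) (at x1)"
    and neg: "\<And>x1 x2. u12 x1 x2 \<le> 0"
begin

lemma smono1: "s < s' \<Longrightarrow> u (s, t) < u (s', t)"
proof -
  assume "s < s'"
  then have "pareto_dom (s', t) (s, t)" unfolding pareto_dom_def by simp
  then show ?thesis using si unfolding strictly_increasing2_def by blast
qed
lemma smono2: "t < t' \<Longrightarrow> u (s, t) < u (s, t')"
proof -
  assume "t < t'"
  then have "pareto_dom (s, t') (s, t)" unfolding pareto_dom_def by simp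
  then show ?thesis using si unfolding strictly_increasing2_def by blast
qed
lemma umono: "s \<le> s' \<Longrightarrow> t \<le> t' \<Longrightarrow> u (s, t) \<le> u (s', t')"
proof -
  assume a: "s \<le> s'" "t \<le> t'"
  have "u (s, t) \<le> u (s', t)" using smono1[of s s' t] a by (cases "s = s'") auto
  also have "\<dots> \<le> u (s', t')" using smono2[of t t' s'] a by (cases "t = t'") auto
  finally show ?thesis .
qed

lemma u2_nonneg: "0 \<le> u2 s t"
proof (rule ccontr)
  assume "\<not> 0 \<le> u2 s t"
  then have "u2 s t < 0" by simp
  from DERIV_neg_dec_left[OF d2 this] obtain d where "d > 0" "\<forall>h>0. h < d \<longrightarrow> u (s, t) < u (s, t - h)"
    by blast
  then have "u (s, t) < u (s, t - d/2)" by simp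
  moreover have "u (s, t - d/2) \<le> u (s, t)" using umono[of s s "t - d/2" t] \<open>d > 0\<close> by simp
  ultimately show False by simp
qed

lemma u2_anti: "s \<le> s' \<Longrightarrow> u2 s' t \<le> u2 s t"
proof -
  assume "s \<le> s'"
  moreover have "\<exists>y. DERIV (\<lambda>s. u2 s t) x :> y \<and> y \<le> 0" for x
    using d12[of t x] neg[of x t] by blast
  ultimately show ?thesis by (rule DERIV_nonpos_imp_nonincreasing[of s s' "\<lambda>s. u2 s t"])
qed

lemma cont2: "isCont (\<lambda>t. u (s, t)) t"
  using d2 by (rule DERIV_isCont)

lemma slice_meas[measurable]: "(\<lambda>x. u (fst x, r)) \<in> borel_measurable (borel \<Otimes>\<^sub>M borel)"
proof -
  have "mono (\<lambda>s. u (s, r))" using umono by (simp add: mono_def)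
  then have "(\<lambda>s. u (s, r)) \<in> borel_measurable borel" by (rule borel_measurable_mono)
  then show ?thesis by (rule measurable_compose[OF measurable_fst'']) simp
qed

lemma key: "c < u x \<longleftrightarrow> (\<exists>q::rat. real_of_rat q < snd x \<and> c < u (fst x, real_of_rat q))"
proof
  assume "\<exists>q::rat. real_of_rat q < snd x \<and> c < u (fst x, real_of_rat q)"
  then obtain q :: rat where "real_of_rat q < snd x" "c < u (fst x, real_of_rat q)" by blast
  moreover have "u (fst x, real_of_rat q) \<le> u (fst x, snd x)" using umono[of "fst x" "fst x" "real_of_rat q" "snd x"] calculation(1) by simp
  ultimately show "c < u x" by simp
next
  assume cx: "c < u x"
  obtain s t where x: "x = (s, t)" by (cases x)
  have "((\<lambda>t. u (s, t)) \<longlongrightarrow> u (s, t)) (at t)" using cont2 by (simp add: isCont_def)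
  then have "eventually (\<lambda>t'. c < u (s, t')) (at t)" using cx x by (intro order_tendstoD(1)) auto
  then obtain d where d: "d > 0" "\<forall>t'. t' \<noteq> t \<and> dist t' t < d \<longrightarrow> c < u (s, t')"
    unfolding eventually_at by auto
  obtain r where r: "r \<in> \<rat>" "t - d < r" "r < t" using Rats_dense_in_real[of "t - d" t] d by auto
  then obtain q where q: "r = real_of_rat q" by (cases rule: Rats_cases)
  have "c < u (s, r)" using d r by (auto simp: dist_real_def)
  then show "\<exists>q::rat. real_of_rat q < snd x \<and> c < u (fst x, real_of_rat q)" using q r x by auto
qed

lemma u_meas'[measurable]: "u \<in> borel_measurable (borel \<Otimes>\<^sub>M borel)"
proof -
  have "{x \<in> space (borel \<Otimes>\<^sub>M borel). c < u x} \<in> sets (borel \<Otimes>\<^sub>M borel)" for c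
  proof -
    have "{x \<in> space (borel \<Otimes>\<^sub>M borel). c < u x} =
        {x \<in> space (borel \<Otimes>\<^sub>M borel). \<exists>q::rat. real_of_rat q < snd x \<and> c < u (fst x, real_of_rat q)}"
      using key by blast
    also have "\<dots> \<in> sets (borel \<Otimes>\<^sub>M borel)" by measurable
    finally show ?thesis .
  qed
  then show ?thesis by (simp add: borel_measurable_iff_greater)
qed

lemma u_meas: "u \<in> borel_measurable borel"
  using u_meas' by (simp only: borel_prod)

lemma u2_meas[measurable]: "case_prod u2 \<in> borel_measurable (borel \<Otimes>\<^sub>M borel)"
proof -
  define g where "g k x = (u (fst x, snd x + 1 / Suc k) - u x) * Suc k" for k :: nat and x :: "real \<times> real"
  have gm: "g k \<in> borel_measurable (borel \<Otimes>\<^sub>M borel)" for k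
    unfolding g_def by measurable
  have lim: "(\<lambda>k. g k x) \<longlonglongrightarrow> case_prod u2 x" for x
  proof -
    obtain s t where x: "x = (s, t)" by (cases x)
    have D: "(\<lambda>h. (u (s, t + h) - u (s, t)) / h) \<midarrow>0\<rightarrow> u2 s t" using d2[of s t] unfolding DERIV_def .
    have A: "\<forall>S. (\<forall>n. S n \<noteq> 0) \<and> S \<longlonglongrightarrow> 0 \<longrightarrow> (\<lambda>n. (u (s, t + S n) - u (s, t)) / S n) \<longlonglongrightarrow> u2 s t"
      by (rule LIMSEQ_SEQ_conv[THEN iffD2, OF D])
    have B: "(\<lambda>n. 1 / real (Suc n)) \<longlonglongrightarrow> 0" using LIMSEQ_Suc[OF lim_const_over_n[of 1]] by simp
    have "(\<lambda>n. (u (s, t + 1 / real (Suc n)) - u (s, t)) / (1 / real (Suc n))) \<longlonglongrightarrow> u2 s t"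
      using A[rule_format, of "\<lambda>n. 1 / real (Suc n)"] B by (simp del: of_nat_Suc)
    then show ?thesis unfolding g_def x by simp
  qed
  show ?thesis by (rule borel_measurable_LIMSEQ_real[OF lim gm])
qed

end

context ufun begin

definition wa :: "real \<Rightarrow> real \<Rightarrow> real \<times> real \<Rightarrow> real" where
  "wa m n x = min (u (max (fst x) (-m), max (snd x) (-m))) n"
definition Ga :: "real \<Rightarrow> real \<Rightarrow> real \<Rightarrow> real" where
  "Ga m n s = Sup (range (\<lambda>t. min (u (max s (-m), t)) n))"
definition ka :: "real \<Rightarrow> real \<Rightarrow> real \<Rightarrow> real \<Rightarrow> real" where
  "ka m n s t = (if -m \<le> t \<and> u (max s (-m), t) < n then u2 (max s (-m)) t else 0)"
definition Ba :: "real \<Rightarrow> real \<Rightarrow> real" where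
  "Ba m n = \<bar>n\<bar> + \<bar>u (-m, -m)\<bar>"

lemma Ga_bdd: "bdd_above (range (\<lambda>t. min (u (max s (-m), t)) n))"
  by (rule bdd_aboveI[of _ n]) auto

lemma Ga_upper: "min (u (max s (-m), t)) n \<le> Ga m n s"
  unfolding Ga_def using Ga_bdd by (intro cSup_upper) auto

lemma Ga_le: "Ga m n s \<le> n"
  unfolding Ga_def by (rule cSup_least) auto

lemma approx_core:
  assumes "two P Q"
  shows "core P Q (wa m n) (Ga m n) (ka m n) (Ba m n)"
proof -
  interpret two P Q by fact
  show ?thesis
  proof (unfold_locales)
    have "wa m n \<in> borel_measurable (borel \<Otimes>\<^sub>M borel)" unfolding wa_def by measurable
    then show "wa m n \<in> borel_measurable borel" by (simp only: borel_prod)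
  next
    show "mono (Ga m n)"
    proof (rule monoI)
      fix s s' :: real assume ss: "s \<le> s'"
      show "Ga m n s \<le> Ga m n s'"
        unfolding Ga_def[of m n s]
      proof (rule cSup_least)
        show "range (\<lambda>t. min (u (max s (-m), t)) n) \<noteq> {}" by simp
        fix y assume "y \<in> range (\<lambda>t. min (u (max s (-m), t)) n)"
        then obtain t where y: "y = min (u (max s (-m), t)) n" by auto
        have "u (max s (-m), t) \<le> u (max s' (-m), t)" using ss by (intro umono) auto
        then have "y \<le> min (u (max s' (-m), t)) n" using y by simp
        also have "\<dots> \<le> Ga m n s'" by (rule Ga_upper)
        finally show "y \<le> Ga m n s'" .
      qed
    qed
  next
    show "case_prod (ka m n) \<in> borel_measurable (borel \<Otimes>\<^sub>M borel)"
      unfolding ka_def by measurable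
  next
    fix s t show "0 \<le> ka m n s t" unfolding ka_def using u2_nonneg by simp
  next
    fix s s' t :: real assume ss: "s \<le> s'"
    show "ka m n s' t \<le> ka m n s t"
    proof (cases "-m \<le> t \<and> u (max s' (-m), t) < n")
      case True
      have "u (max s (-m), t) \<le> u (max s' (-m), t)" using ss by (intro umono) auto
      then have "-m \<le> t \<and> u (max s (-m), t) < n" using True by simp
      moreover have "u2 (max s' (-m)) t \<le> u2 (max s (-m)) t" using ss by (intro u2_anti) auto
      ultimately show ?thesis using True unfolding ka_def by simp
    next
      case False
      then have "ka m n s' t = 0" unfolding ka_def by auto
      then show ?thesis unfolding ka_def using u2_nonneg by simp
    qed
  next
    fix x :: "real \<times> real"
    have lo: "u (-m, -m) \<le> u (max (fst x) (-m), max (snd x) (-m))" by (intro umono) auto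
    show "\<bar>wa m n x\<bar> \<le> Ba m n" unfolding wa_def Ba_def using lo by (auto simp: abs_le_iff min_def)
  next
    fix s :: real
    have lo: "u (-m, -m) \<le> u (max s (-m), -m)" by (intro umono) auto
    have "min (u (max s (-m), -m)) n \<le> Ga m n s" by (rule Ga_upper)
    then show "\<bar>Ga m n s\<bar> \<le> Ba m n" unfolding Ba_def using lo Ga_le[of m n s]
      by (auto simp: abs_le_iff min_def split: if_splits)
  next
    fix s z :: real
    show "wa m n (s, z) \<le> Ga m n s" unfolding wa_def by (simp add: Ga_upper)
  next
    fix s z :: real
    define y where "y = max s (-m)"
    have fm: "(\<lambda>t. u2 y t) \<in> borel_measurable borel" by measurable
    have F: "(\<integral>\<^sup>+t. ennreal (if u (y, t) < n then u2 y t else 0) * indicator {max z (-m)..} t \<partial>lborel)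
         = ennreal (Sup (range (\<lambda>t. min (u (y, t)) n)) - min (u (y, max z (-m))) n)"
    proof (rule ftc1[of "\<lambda>t. u (y, t)" "u2 y"])
      show "\<And>s t. s < t \<Longrightarrow> u (y, s) < u (y, t)" by (rule smono2)
      show "\<And>t. ((\<lambda>t. u (y, t)) has_real_derivative u2 y t) (at t)" by (rule d2)
      show "\<And>t. 0 \<le> u2 y t" by (rule u2_nonneg)
      show "u2 y \<in> borel_measurable borel" using fm by simp
    qed
    have "(\<integral>\<^sup>+t. ennreal (ka m n s t) * indicator {z..} t \<partial>lborel)
        = (\<integral>\<^sup>+t. ennreal (if u (y, t) < n then u2 y t else 0) * indicator {max z (-m)..} t \<partial>lborel)"
      by (intro nn_integral_cong) (auto simp: ka_def y_def indicator_def)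
    also have "\<dots> = ennreal (Ga m n s - wa m n (s, z))" unfolding F by (simp add: Ga_def wa_def y_def)
    finally show "ennreal (Ga m n s - wa m n (s, z)) = (\<integral>\<^sup>+t. ennreal (ka m n s t) * indicator {z..} t \<partial>lborel)"
      by simp
  qed
qed

end

lemma rc_lemma:
  fixes P :: "(real \<times> real) measure" and g :: "real \<times> real \<Rightarrow> real"
  assumes "prob_space P" and sP[measurable_cong]: "sets P = sets (borel \<Otimes>\<^sub>M borel)"
    and gm[measurable]: "g \<in> borel_measurable (borel \<Otimes>\<^sub>M borel)" and e: "0 < \<epsilon>"
  shows "\<exists>a'>a. measure P {x. g x \<le> a'} < measure P {x. g x \<le> a} + \<epsilon>"
proof -
  interpret prob_space P by fact
  have sp: "space P = UNIV" using sets_eq_imp_space_eq[OF sP] by (simp add: space_pair_measure)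
  define A where "A k = {x. g x \<le> a + 1 / Suc k}" for k :: nat
  have mA: "A k \<in> sets P" for k
  proof -
    have "{x \<in> space P. g x \<le> a + 1 / Suc k} \<in> sets P" by measurable
    then show ?thesis unfolding A_def sp by simp
  qed
  have dA: "decseq A" unfolding A_def decseq_def
    by (auto simp: frac_le intro: order_trans)
  have IA: "(\<Inter>k. A k) = {x. g x \<le> a}"
  proof
    show "{x. g x \<le> a} \<subseteq> (\<Inter>k. A k)" unfolding A_def by (auto intro: order_trans)
    show "(\<Inter>k. A k) \<subseteq> {x. g x \<le> a}"
    proof
      fix x assume x: "x \<in> (\<Inter>k. A k)"
      show "x \<in> {x. g x \<le> a}"
      proof (rule ccontr)
        assume "x \<notin> {x. g x \<le> a}"
        then have pos: "0 < g x - a" by simp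
        obtain k :: nat where k: "1 / (g x - a) < real k" using reals_Archimedean2 by blast
        then have "1 < real k * (g x - a)" using pos by (simp add: field_simps)
        then have "1 / real (Suc k) < g x - a" using pos by (simp add: field_simps)
        moreover have "g x \<le> a + 1 / Suc k" using x unfolding A_def by auto
        ultimately show False by simp
      qed
    qed
  qed
  have "(\<lambda>k. measure P (A k)) \<longlonglongrightarrow> measure P {x. g x \<le> a}"
    using finite_Lim_measure_decseq[of A] mA dA unfolding IA by auto
  then have "eventually (\<lambda>k. measure P (A k) < measure P {x. g x \<le> a} + \<epsilon>) sequentially"
    using e by (intro order_tendstoD(2)) auto
  then obtain N where "\<forall>k\<ge>N. measure P (A k) < measure P {x. g x \<le> a} + \<epsilon>"
    unfolding eventually_sequentially by blast
  then obtain k where "measure P (A k) < measure P {x. g x \<le> a} + \<epsilon>" by blast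
  then show ?thesis unfolding A_def by (intro exI[of _ "a + 1 / Suc k"]) auto
qed

lemma ic_lemma:
  fixes Q :: "(real \<times> real) measure" and g h :: "real \<times> real \<Rightarrow> real"
  assumes "prob_space Q" and sQ[measurable_cong]: "sets Q = sets (borel \<Otimes>\<^sub>M borel)"
    and gm[measurable]: "g \<in> borel_measurable (borel \<Otimes>\<^sub>M borel)"
    and hm[measurable]: "h \<in> borel_measurable (borel \<Otimes>\<^sub>M borel)" and e: "0 < \<epsilon>"
  shows "\<exists>T. measure Q {x. g x \<le> a} - \<epsilon> < measure Q {x. g x \<le> a \<and> h x \<le> T}"
proof -
  interpret prob_space Q by fact
  have sp: "space Q = UNIV" using sets_eq_imp_space_eq[OF sQ] by (simp add: space_pair_measure)
  define A where "A k = {x. g x \<le> a \<and> h x \<le> real k}" for k :: nat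
  have mA: "A k \<in> sets Q" for k
  proof -
    have "{x \<in> space Q. g x \<le> a \<and> h x \<le> real k} \<in> sets Q" by measurable
    then show ?thesis unfolding A_def sp by simp
  qed
  have iA: "incseq A" unfolding A_def incseq_def by (auto intro: order_trans)
  have UA: "(\<Union>k. A k) = {x. g x \<le> a}"
    unfolding A_def using real_arch_simple by fastforce
  have "(\<lambda>k. measure Q (A k)) \<longlonglongrightarrow> measure Q {x. g x \<le> a}"
    using finite_Lim_measure_incseq[of A] mA iA unfolding UA by auto
  then have "eventually (\<lambda>k. measure Q {x. g x \<le> a} - \<epsilon> < measure Q (A k)) sequentially"
    using e by (intro order_tendstoD(1)) auto
  then obtain N where "\<forall>k\<ge>N. measure Q {x. g x \<le> a} - \<epsilon> < measure Q (A k)"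
    unfolding eventually_sequentially by blast
  then obtain k where "measure Q {x. g x \<le> a} - \<epsilon> < measure Q (A k)" by blast
  then show ?thesis unfolding A_def by blast
qed

context ufun begin

lemma wa_meas[measurable]: "wa m n \<in> borel_measurable (borel \<Otimes>\<^sub>M borel)"
  unfolding wa_def by measurable

lemma lim1:
  assumes "prob_space P" and sP[measurable_cong]: "sets P = sets (borel \<Otimes>\<^sub>M borel)" and iu: "integrable P u"
  shows "(\<lambda>k. \<integral>x. wa (real k) n x \<partial>P) \<longlonglongrightarrow> (\<integral>x. min (u x) n \<partial>P)"
proof (rule integral_dominated_convergence[where w="\<lambda>x. \<bar>u x\<bar> + \<bar>n\<bar>"])
  show "(\<lambda>x. min (u x) n) \<in> borel_measurable P" by measurable
  show "wa (real k) n \<in> borel_measurable P" for k by measurable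
  show "integrable P (\<lambda>x. \<bar>u x\<bar> + \<bar>n\<bar>)"
  proof -
    interpret prob_space P by fact
    show ?thesis using iu by auto
  qed
  show "AE x in P. (\<lambda>k. wa (real k) n x) \<longlonglongrightarrow> min (u x) n"
  proof (rule AE_I2)
    fix x :: "real \<times> real"
    obtain N :: nat where N: "max (- fst x) (- snd x) \<le> real N" using real_arch_simple by blast
    have "\<forall>k\<ge>N. wa (real k) n x = min (u x) n"
    proof (intro allI impI)
      fix k assume "N \<le> k"
      then have "max (- fst x) (- snd x) \<le> real k" using N by (meson of_nat_le_iff order_trans)
      then have "max (fst x) (- real k) = fst x" "max (snd x) (- real k) = snd x" by auto
      then show "wa (real k) n x = min (u x) n" unfolding wa_def by simp
    qed
    then show "(\<lambda>k. wa (real k) n x) \<longlonglongrightarrow> min (u x) n"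
      by (intro tendsto_eventually) (auto simp: eventually_sequentially)
  qed
  show "AE x in P. norm (wa (real k) n x) \<le> \<bar>u x\<bar> + \<bar>n\<bar>" for k
  proof (rule AE_I2)
    fix x :: "real \<times> real"
    have "u x \<le> u (max (fst x) (- real k), max (snd x) (- real k))"
      using umono[of "fst x" "max (fst x) (- real k)" "snd x" "max (snd x) (- real k)"] by simp
    then have "min (u x) n \<le> wa (real k) n x" "wa (real k) n x \<le> n" unfolding wa_def by auto
    then show "norm (wa (real k) n x) \<le> \<bar>u x\<bar> + \<bar>n\<bar>" by (auto simp: abs_le_iff min_def split: if_splits)
  qed
qed

lemma lim2:
  assumes "prob_space P" and sP[measurable_cong]: "sets P = sets (borel \<Otimes>\<^sub>M borel)" and iu: "integrable P u"
  shows "(\<lambda>k. \<integral>x. min (u x) (real k) \<partial>P) \<longlonglongrightarrow> (\<integral>x. u x \<partial>P)"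
proof (rule integral_dominated_convergence[where w="\<lambda>x. \<bar>u x\<bar>"])
  show "u \<in> borel_measurable P" by measurable
  show "(\<lambda>x. min (u x) (real k)) \<in> borel_measurable P" for k by measurable
  show "integrable P (\<lambda>x. \<bar>u x\<bar>)" using iu by auto
  show "AE x in P. (\<lambda>k. min (u x) (real k)) \<longlonglongrightarrow> u x"
  proof (rule AE_I2)
    fix x :: "real \<times> real"
    obtain N :: nat where N: "u x \<le> real N" using real_arch_simple by blast
    have "\<forall>k\<ge>N. min (u x) (real k) = u x"
      using N by (auto intro: order_trans)
    then show "(\<lambda>k. min (u x) (real k)) \<longlonglongrightarrow> u x"
      by (intro tendsto_eventually) (auto simp: eventually_sequentially)
  qed
  show "AE x in P. norm (min (u x) (real k)) \<le> \<bar>u x\<bar>" for k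
    by (rule AE_I2) (auto simp: abs_le_iff min_def)
qed

end

theorem theorem3p2:
  fixes M :: "'a measure" and N :: "'b measure"
    and X :: "'a \<Rightarrow> real \<times> real" and Y :: "'b \<Rightarrow> real \<times> real"
    and u :: "real \<times> real \<Rightarrow> real"
  assumes "prob_space M" and "prob_space N"
    and "X \<in> borel_measurable M" and "Y \<in> borel_measurable N"
    and "dist_dom M X N Y"
    and "strictly_increasing2 u"
    and "mixed_partial_nonpos u"
    and "integrable M (\<lambda>\<omega>. u (X \<omega>))" and "integrable N (\<lambda>\<omega>. u (Y \<omega>))"
  shows "(\<integral>\<omega>. u (X \<omega>) \<partial>M) > (\<integral>\<omega>. u (Y \<omega>) \<partial>N)"
proof -
  obtain u2 u12 where d2: "\<And>x1 x2. ((\<lambda>t. u (x1, t)) has_real_derivative u2 x1 x2) (at x2)"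
    and d12: "\<And>x1 x2. ((\<lambda>s. u2 s x2) has_real_derivative u12 x1 x2) (at x1)"
    and neg: "\<And>x1 x2. u12 x1 x2 \<le> 0"
    using assms(7) unfolding mixed_partial_nonpos_def by blast
  interpret U: ufun u u2 u12
    by (rule ufun.intro[OF assms(6) d2 d12 neg])
  define P where "P = distr M borel X"
  define Q where "Q = distr N borel Y"
  have pP: "prob_space P" unfolding P_def by (rule prob_space.prob_space_distr[OF assms(1) assms(3)])
  have pQ: "prob_space Q" unfolding Q_def by (rule prob_space.prob_space_distr[OF assms(2) assms(4)])
  have sP: "sets P = sets borel" unfolding P_def by simp
  have sQ: "sets Q = sets borel" unfolding Q_def by simp
  have sP2: "sets P = sets (borel \<Otimes>\<^sub>M borel)" by (simp only: sP borel_prod)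
  have sQ2: "sets Q = sets (borel \<Otimes>\<^sub>M borel)" by (simp only: sQ borel_prod)
  have mP: "measure P {x. R x} = measure M {\<omega> \<in> space M. R (X \<omega>)}"
    if "Measurable.pred (borel \<Otimes>\<^sub>M borel) R" for R
  proof -
    have "{x. R x} \<in> sets borel" by (rule set_borel2[OF that])
    then have "measure P {x. R x} = measure M (X -` {x. R x} \<inter> space M)"
      unfolding P_def by (rule measure_distr[OF assms(3)])
    also have "X -` {x. R x} \<inter> space M = {\<omega> \<in> space M. R (X \<omega>)}" by auto
    finally show ?thesis .
  qed
  have mQ: "measure Q {x. R x} = measure N {\<omega> \<in> space N. R (Y \<omega>)}"
    if "Measurable.pred (borel \<Otimes>\<^sub>M borel) R" for R
  proof -
    have "{x. R x} \<in> sets borel" by (rule set_borel2[OF that])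
    then have "measure Q {x. R x} = measure N (Y -` {x. R x} \<inter> space N)"
      unfolding Q_def by (rule measure_distr[OF assms(4)])
    also have "Y -` {x. R x} \<inter> space N = {\<omega> \<in> space N. R (Y \<omega>)}" by auto
    finally show ?thesis .
  qed
  have dd: "fsd_weak2 M X N Y" and strict: "fsd_strict1 M (\<lambda>\<omega>. fst (X \<omega>)) N (\<lambda>\<omega>. fst (Y \<omega>)) \<or>
      fsd_strict1 M (\<lambda>\<omega>. snd (X \<omega>)) N (\<lambda>\<omega>. snd (Y \<omega>))"
    using assms(5) unfolding dist_dom_def by auto
  have lo: "measure P {x. fst x \<le> s \<and> snd x \<le> t} \<le> measure Q {x. fst x \<le> s \<and> snd x \<le> t}" for s t
  proof -
    have pr: "Measurable.pred (borel \<Otimes>\<^sub>M borel) (\<lambda>x::real\<times>real. fst x \<le> s \<and> snd x \<le> t)" by measurable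
    have "measure P {x. fst x \<le> s \<and> snd x \<le> t} = cdf2 M X (s, t)"
      unfolding cdf2_def mP[OF pr] by simp
    moreover have "measure Q {x. fst x \<le> s \<and> snd x \<le> t} = cdf2 N Y (s, t)"
      unfolding cdf2_def mQ[OF pr] by simp
    ultimately show ?thesis using dd unfolding fsd_weak2_def by simp
  qed
  interpret T: two P Q by (intro two.intro two_axioms.intro pP pQ sP sQ lo)
  have pf: "Measurable.pred (borel \<Otimes>\<^sub>M borel) (\<lambda>x::real\<times>real. fst x \<le> a)" for a by measurable
  have ps: "Measurable.pred (borel \<Otimes>\<^sub>M borel) (\<lambda>x::real\<times>real. snd x \<le> a)" for a by measurable
  have c1P: "cdf1 M (\<lambda>\<omega>. fst (X \<omega>)) a = measure P {x. fst x \<le> a}" for a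
    unfolding cdf1_def by (subst mP) (simp_all add: pf ps)
  have c1Q: "cdf1 N (\<lambda>\<omega>. fst (Y \<omega>)) a = measure Q {x. fst x \<le> a}" for a
    unfolding cdf1_def by (subst mQ) (simp_all add: pf ps)
  have c2P: "cdf1 M (\<lambda>\<omega>. snd (X \<omega>)) a = measure P {x. snd x \<le> a}" for a
    unfolding cdf1_def by (subst mP) (simp_all add: pf ps)
  have c2Q: "cdf1 N (\<lambda>\<omega>. snd (Y \<omega>)) a = measure Q {x. snd x \<le> a}" for a
    unfolding cdf1_def by (subst mQ) (simp_all add: pf ps)
  have core: "core P Q (U.wa m n) (U.Ga m n) (U.ka m n) (U.Ba m n)" for m n
    by (rule U.approx_core) (rule T.two_axioms)
  have key: "\<exists>\<eta> c0 m0 n0. 0 < \<eta> \<and> 0 < c0 \<and>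
      (\<forall>m n. m0 \<le> m \<longrightarrow> n0 \<le> n \<longrightarrow> (\<integral>x. U.wa m n x \<partial>Q) + \<eta> * c0 \<le> (\<integral>x. U.wa m n x \<partial>P))"
    using strict
  proof
    assume "fsd_strict1 M (\<lambda>\<omega>. fst (X \<omega>)) N (\<lambda>\<omega>. fst (Y \<omega>))"
    then obtain a where a: "measure P {x. fst x \<le> a} < measure Q {x. fst x \<le> a}"
      unfolding fsd_strict1_def c1P c1Q by blast
    define \<eta> where "\<eta> = (measure Q {x. fst x \<le> a} - measure P {x. fst x \<le> a}) / 3"
    have eta: "0 < \<eta>" using a unfolding \<eta>_def by simp
    obtain a' where a': "a < a'" "measure P {x. fst x \<le> a'} < measure P {x. fst x \<le> a} + \<eta>"
      using rc_lemma[where g=fst and a=a, OF pP sP2 _ eta] by auto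
    obtain T where T: "measure Q {x. fst x \<le> a} - \<eta> < measure Q {x. fst x \<le> a \<and> snd x \<le> T}"
      using ic_lemma[where g=fst and a=a and h=snd, OF pQ sQ2 _ _ eta] by auto
    have cond: "measure P {x. fst x \<le> a'} + \<eta> \<le> measure Q {x. fst x \<le> a \<and> snd x \<le> T}"
    proof -
      have e3: "measure Q {x. fst x \<le> a} - measure P {x. fst x \<le> a} = 3 * \<eta>" unfolding \<eta>_def by simp
      show ?thesis using a'(2) T e3 by linarith
    qed
    define c0 where "c0 = u (a', T) - u (a, T)"
    have c0: "0 < c0" unfolding c0_def using U.smono1[OF a'(1)] by simp
    have "\<forall>m n. max (-a) (-T) \<le> m \<longrightarrow> u (a', T) \<le> n \<longrightarrow> (\<integral>x. U.wa m n x \<partial>Q) + \<eta> * c0 \<le> (\<integral>x. U.wa m n x \<partial>P)"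
    proof (intro allI impI)
      fix m n assume m: "max (-a) (-T) \<le> m" and n: "u (a', T) \<le> n"
      interpret C: core P Q "U.wa m n" "U.Ga m n" "U.ka m n" "U.Ba m n" by (rule core)
      have w1: "U.wa m n (a', T) = u (a', T)" using m n a'(1) unfolding U.wa_def by simp
      have w2: "U.wa m n (a, T) = u (a, T)" using m n U.smono1[OF a'(1), of T] unfolding U.wa_def by simp
      show "(\<integral>x. U.wa m n x \<partial>Q) + \<eta> * c0 \<le> (\<integral>x. U.wa m n x \<partial>P)"
        using C.C1[OF less_imp_le[OF a'(1)] less_imp_le[OF eta] cond] unfolding w1 w2 c0_def .
    qed
    then show ?thesis using eta c0 by blast
  next
    assume "fsd_strict1 M (\<lambda>\<omega>. snd (X \<omega>)) N (\<lambda>\<omega>. snd (Y \<omega>))"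
    then obtain b where b: "measure P {x. snd x \<le> b} < measure Q {x. snd x \<le> b}"
      unfolding fsd_strict1_def c2P c2Q by blast
    define \<eta> where "\<eta> = (measure Q {x. snd x \<le> b} - measure P {x. snd x \<le> b}) / 3"
    have eta: "0 < \<eta>" using b unfolding \<eta>_def by simp
    obtain b' where b': "b < b'" "measure P {x. snd x \<le> b'} < measure P {x. snd x \<le> b} + \<eta>"
      using rc_lemma[where g=snd and a=b, OF pP sP2 _ eta] by auto
    obtain S where S: "measure Q {x. snd x \<le> b} - \<eta> < measure Q {x. snd x \<le> b \<and> fst x \<le> S}"
      using ic_lemma[where g=snd and a=b and h=fst, OF pQ sQ2 _ _ eta] by auto
    have "{x. snd x \<le> b \<and> fst x \<le> S} = {x::real\<times>real. fst x \<le> S \<and> snd x \<le> b}" by auto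
    then have cond: "measure P {x. snd x \<le> b'} + \<eta> \<le> measure Q {x. fst x \<le> S \<and> snd x \<le> b}"
    proof -
      assume ee: "{x. snd x \<le> b \<and> fst x \<le> S} = {x::real\<times>real. fst x \<le> S \<and> snd x \<le> b}"
      have e3: "measure Q {x. snd x \<le> b} - measure P {x. snd x \<le> b} = 3 * \<eta>" unfolding \<eta>_def by simp
      show ?thesis using b'(2) S e3 unfolding ee by linarith
    qed
    define c0 where "c0 = u (S, b') - u (S, b)"
    have c0: "0 < c0" unfolding c0_def using U.smono2[OF b'(1)] by simp
    have "\<forall>m n. max (-S) (-b) \<le> m \<longrightarrow> u (S, b') \<le> n \<longrightarrow> (\<integral>x. U.wa m n x \<partial>Q) + \<eta> * c0 \<le> (\<integral>x. U.wa m n x \<partial>P)"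
    proof (intro allI impI)
      fix m n assume m: "max (-S) (-b) \<le> m" and n: "u (S, b') \<le> n"
      interpret C: core P Q "U.wa m n" "U.Ga m n" "U.ka m n" "U.Ba m n" by (rule core)
      have w1: "U.wa m n (S, b') = u (S, b')" using m n b'(1) unfolding U.wa_def by simp
      have w2: "U.wa m n (S, b) = u (S, b)" using m n U.smono2[OF b'(1), of S] unfolding U.wa_def by simp
      show "(\<integral>x. U.wa m n x \<partial>Q) + \<eta> * c0 \<le> (\<integral>x. U.wa m n x \<partial>P)"
        using C.C2[OF less_imp_le[OF b'(1)] less_imp_le[OF eta] cond] unfolding w1 w2 c0_def .
    qed
    then show ?thesis using eta c0 by blast
  qed
  then obtain \<eta> c0 m0 n0 where eta: "0 < \<eta>" and c0: "0 < c0"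
    and ineq: "\<And>m n. m0 \<le> m \<Longrightarrow> n0 \<le> n \<Longrightarrow> (\<integral>x. U.wa m n x \<partial>Q) + \<eta> * c0 \<le> (\<integral>x. U.wa m n x \<partial>P)"
    by blast
  have iuP: "integrable P u" unfolding P_def using assms(8)
    by (subst integrable_distr_eq[OF assms(3) U.u_meas])
  have iuQ: "integrable Q u" unfolding Q_def using assms(9)
    by (subst integrable_distr_eq[OF assms(4) U.u_meas])
  have step1: "(\<integral>x. min (u x) n \<partial>Q) + \<eta> * c0 \<le> (\<integral>x. min (u x) n \<partial>P)" if n: "n0 \<le> n" for n
  proof (rule LIMSEQ_le)
    show "(\<lambda>k. (\<integral>x. U.wa (real k) n x \<partial>Q) + \<eta> * c0) \<longlonglongrightarrow> (\<integral>x. min (u x) n \<partial>Q) + \<eta> * c0"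
      by (intro tendsto_add U.lim1[OF pQ sQ2 iuQ] tendsto_const)
    show "(\<lambda>k. \<integral>x. U.wa (real k) n x \<partial>P) \<longlonglongrightarrow> (\<integral>x. min (u x) n \<partial>P)"
      by (rule U.lim1[OF pP sP2 iuP])
    obtain K :: nat where K: "m0 \<le> real K" using real_arch_simple by blast
    show "\<exists>K. \<forall>k\<ge>K. (\<integral>x. U.wa (real k) n x \<partial>Q) + \<eta> * c0 \<le> (\<integral>x. U.wa (real k) n x \<partial>P)"
    proof (intro exI allI impI)
      fix k assume "K \<le> k"
      then have "m0 \<le> real k" using K by (meson of_nat_le_iff order_trans)
      then show "(\<integral>x. U.wa (real k) n x \<partial>Q) + \<eta> * c0 \<le> (\<integral>x. U.wa (real k) n x \<partial>P)"
        using ineq n by blast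
    qed
  qed
  have step2: "(\<integral>x. u x \<partial>Q) + \<eta> * c0 \<le> (\<integral>x. u x \<partial>P)"
  proof (rule LIMSEQ_le)
    show "(\<lambda>k. (\<integral>x. min (u x) (real k) \<partial>Q) + \<eta> * c0) \<longlonglongrightarrow> (\<integral>x. u x \<partial>Q) + \<eta> * c0"
      by (intro tendsto_add U.lim2[OF pQ sQ2 iuQ] tendsto_const)
    show "(\<lambda>k. \<integral>x. min (u x) (real k) \<partial>P) \<longlonglongrightarrow> (\<integral>x. u x \<partial>P)"
      by (rule U.lim2[OF pP sP2 iuP])
    obtain K :: nat where K: "n0 \<le> real K" using real_arch_simple by blast
    show "\<exists>K. \<forall>k\<ge>K. (\<integral>x. min (u x) (real k) \<partial>Q) + \<eta> * c0 \<le> (\<integral>x. min (u x) (real k) \<partial>P)"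
    proof (intro exI allI impI)
      fix k assume "K \<le> k"
      then have "n0 \<le> real k" using K by (meson of_nat_le_iff order_trans)
      then show "(\<integral>x. min (u x) (real k) \<partial>Q) + \<eta> * c0 \<le> (\<integral>x. min (u x) (real k) \<partial>P)"
        by (rule step1)
    qed
  qed
  have eP: "(\<integral>x. u x \<partial>P) = (\<integral>\<omega>. u (X \<omega>) \<partial>M)" unfolding P_def
    by (rule integral_distr[OF assms(3) U.u_meas])
  have eQ: "(\<integral>x. u x \<partial>Q) = (\<integral>\<omega>. u (Y \<omega>) \<partial>N)" unfolding Q_def
    by (rule integral_distr[OF assms(4) U.u_meas])
  have "0 < \<eta> * c0" using eta c0 by simp
  then show ?thesis using step2 unfolding eP eQ by linarith
qed

end
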